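(* For every $q\geqslant 1$ there exist $\tilde{p}<1$ and $\kappa>1$ such that for every $p\geqslant\tilde{p}$, every $c\geqslant 1$ and every box $\Lambda$ with $|\Lambda|>3^{6d}$, $$\Phi^{TB}_{\Lambda,p,q}\Big(\exists C\in\mathcal{C},\ \exists e\in C,\ d\big(e,\mathcal{P}\cup\Lambda^c\setminus\{e\}\big)\geqslant\kappa c\ln|\Lambda|\ \Big|\ T\nleftrightarrow B\Big)\leqslant\frac{1}{|\Lambda|^c}.$$
   Context: Let $d\geqslant 2$ and $\mathbb{L}^d=(\mathbb{Z}^d,\mathbb{E}^d)$ the nearest-neighbour lattice. The box $\Lambda=(V,E)$ is the subgraph of $\mathbb{L}^d$ induced by the vertices in a $d$-dimensional cube centred at the origin (not necessarily axis-parallel); $|\Lambda|$ is its cardinality (number of edges), $\Lambda^c$ its complement, $d(\cdot,\cdot)$ the lattice distance between edges/sets of edges. $\partial\Lambda=\{x\in V:\exists y\notin V,\ \langle x,y\rangle\in\mathbb{E}^d\}$. A hyperplane through the origin parallel to a face of the cube splits $\Lambda$ into $\Lambda^+,\Lambda^-$; $T=\partial\Lambda\cap\Lambda^+$, $B=\partial\Lambda\cap\Lambda^-$. For $\omega\in\{0,1\}^E$ (edges with $\omega(e)=1$ open, others closed), $\Phi^{TB}_{\Lambda,p,q}(\omega)\propto\prod_{e\in E}p^{\omega(e)}(1-p)^{1-\omega(e)}q^{k^{TB}(\omega)}$, where $k^{TB}(\omega)$ is the number of connected components (isolated vertices included) of the graph obtained from $(V,\{\text{open edges}\})$ by adding two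 extra vertices, one joined to every vertex of $T$ and the other to every vertex of $B$. $\{T\nleftrightarrow B\}$: no open path in $\Lambda$ joins $T$ to $B$. A set $S$ of edges separates $T$ and $B$ if no connected subgraph of $(V,E\setminus S)$ meets both $T$ and $B$; a cut is such a separating set which is minimal for inclusion. $\mathcal{C}$ denotes the set of cuts of the configuration, i.e. cuts all of whose edges are closed. $\mathcal{P}$ is the set of pivotal edges: edges $e\in E$ whose opening would create an open path from $T$ to $B$. *)

theory Defs
  imports Complex_Main
begin

definition l1 :: "nat \<Rightarrow> int list \<Rightarrow> int list \<Rightarrow> int" where
  "l1 d x y = (\<Sum>i<d. \<bar>x ! i - y ! i\<bar>)"

definition lattice_pt :: "nat \<Rightarrow> int list \<Rightarrow> bool" where
  "lattice_pt d x \<longleftrightarrow> length x = d"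

definition lattice_adj :: "nat \<Rightarrow> int list \<Rightarrow> int list \<Rightarrow> bool" where
  "lattice_adj d x y \<longleftrightarrow> lattice_pt d x \<and> lattice_pt d y \<and> l1 d x y = 1"

definition lattice_edge :: "nat \<Rightarrow> int list set \<Rightarrow> bool" where
  "lattice_edge d e \<longleftrightarrow> (\<exists>x y. e = {x, y} \<and> lattice_adj d x y)"

text \<open>A cube centred at the origin: orthonormal frame u 0, ..., u (d-1) of R^d and
  half side-length r; the box vertices are the lattice points in the (closed) cube.\<close>

definition inner_pt :: "nat \<Rightarrow> (nat \<Rightarrow> real) \<Rightarrow> int list \<Rightarrow> real" where
  "inner_pt d v x = (\<Sum>k<d. v k * real_of_int (x ! k))"

definition orthonormal_frame :: "nat \<Rightarrow> (nat \<Rightarrow> nat \<Rightarrow> real) \<Rightarrow> bool" where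
  "orthonormal_frame d u \<longleftrightarrow>
     (\<forall>i<d. \<forall>j<d. (\<Sum>k<d. u i k * u j k) = (if i = j then 1 else 0))"

definition box_V :: "nat \<Rightarrow> (nat \<Rightarrow> nat \<Rightarrow> real) \<Rightarrow> real \<Rightarrow> int list set" where
  "box_V d u r = {x. lattice_pt d x \<and> (\<forall>i<d. \<bar>inner_pt d (u i) x\<bar> \<le> r)}"

definition box_E :: "nat \<Rightarrow> (nat \<Rightarrow> nat \<Rightarrow> real) \<Rightarrow> real \<Rightarrow> int list set set" where
  "box_E d u r = {e. lattice_edge d e \<and> e \<subseteq> box_V d u r}"

definition box_Ec :: "nat \<Rightarrow> (nat \<Rightarrow> nat \<Rightarrow> real) \<Rightarrow> real \<Rightarrow> int list set set" where
  "box_Ec d u r = {e. lattice_edge d e \<and> e \<notin> box_E d u r}"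

definition box_bd :: "nat \<Rightarrow> (nat \<Rightarrow> nat \<Rightarrow> real) \<Rightarrow> real \<Rightarrow> int list set" where
  "box_bd d u r = {x \<in> box_V d u r. \<exists>y. y \<notin> box_V d u r \<and> lattice_adj d x y}"

text \<open>Splitting by the hyperplane through 0 orthogonal to u j (parallel to a face).\<close>
definition box_T :: "nat \<Rightarrow> (nat \<Rightarrow> nat \<Rightarrow> real) \<Rightarrow> real \<Rightarrow> nat \<Rightarrow> int list set" where
  "box_T d u r j = {x \<in> box_bd d u r. inner_pt d (u j) x \<ge> 0}"

definition box_B :: "nat \<Rightarrow> (nat \<Rightarrow> nat \<Rightarrow> real) \<Rightarrow> real \<Rightarrow> nat \<Rightarrow> int list set" where
  "box_B d u r j = {x \<in> box_bd d u r. inner_pt d (u j) x < 0}"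

text \<open>Adjacency relation induced by a set of edges (configurations are given by
  their set of open edges).\<close>
definition adj_rel :: "'v set set \<Rightarrow> ('v \<times> 'v) set" where
  "adj_rel F = {(x, y). {x, y} \<in> F \<and> x \<noteq> y}"

definition connects :: "'v set set \<Rightarrow> 'v set \<Rightarrow> 'v set \<Rightarrow> bool" where
  "connects F T B \<longleftrightarrow> (\<exists>x\<in>T. \<exists>y\<in>B. (x, y) \<in> (adj_rel F)\<^sup>*)"

definition separates :: "'v set set \<Rightarrow> 'v set set \<Rightarrow> 'v set \<Rightarrow> 'v set \<Rightarrow> bool" where
  "separates E S T B \<longleftrightarrow> S \<subseteq> E \<and> \<not> connects (E - S) T B"

definition is_cut :: "'v set set \<Rightarrow> 'v set set \<Rightarrow> 'v set \<Rightarrow> 'v set \<Rightarrow> bool" where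
  "is_cut E S T B \<longleftrightarrow> separates E S T B \<and> (\<forall>S'. S' \<subset> S \<longrightarrow> \<not> separates E S' T B)"

definition cuts_of :: "'v set set \<Rightarrow> 'v set \<Rightarrow> 'v set \<Rightarrow> 'v set set \<Rightarrow> 'v set set set" where
  "cuts_of E T B \<omega> = {C. is_cut E C T B \<and> C \<inter> \<omega> = {}}"

definition pivotal :: "'v set set \<Rightarrow> 'v set \<Rightarrow> 'v set \<Rightarrow> 'v set set \<Rightarrow> 'v set set" where
  "pivotal E T B \<omega> = {e \<in> E. \<not> connects \<omega> T B \<and> connects (insert e \<omega>) T B}"

definition kTB :: "'v set \<Rightarrow> 'v set \<Rightarrow> 'v set \<Rightarrow> 'v set set \<Rightarrow> nat" where
  "kTB V T B \<omega> =
    (let V' = Inl ` V \<union> {Inr True, Inr False};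
         R = {(Inl x, Inl y) | x y. {x, y} \<in> \<omega>}
           \<union> {(Inr True, Inl x) | x. x \<in> T}
           \<union> {(Inr False, Inl x) | x. x \<in> B};
         Rel = (R \<union> R\<inverse>)\<^sup>* \<inter> (V' \<times> V')
     in card (V' // Rel))"

definition rc_weight :: "'v set \<Rightarrow> 'v set set \<Rightarrow> 'v set \<Rightarrow> 'v set \<Rightarrow> real \<Rightarrow> real
    \<Rightarrow> 'v set set \<Rightarrow> real" where
  "rc_weight V E T B p q \<omega> =
     p ^ card \<omega> * (1 - p) ^ (card E - card \<omega>) * q ^ kTB V T B \<omega>"

definition PhiTB :: "'v set \<Rightarrow> 'v set set \<Rightarrow> 'v set \<Rightarrow> 'v set \<Rightarrow> real \<Rightarrow> real
    \<Rightarrow> ('v set set \<Rightarrow> bool) \<Rightarrow> real" where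
  "PhiTB V E T B p q A =
     (\<Sum>\<omega>\<in>{\<omega>. \<omega> \<subseteq> E \<and> A \<omega>}. rc_weight V E T B p q \<omega>)
     / (\<Sum>\<omega>\<in>Pow E. rc_weight V E T B p q \<omega>)"

definition PhiTB_cond :: "'v set \<Rightarrow> 'v set set \<Rightarrow> 'v set \<Rightarrow> 'v set \<Rightarrow> real \<Rightarrow> real
    \<Rightarrow> ('v set set \<Rightarrow> bool) \<Rightarrow> ('v set set \<Rightarrow> bool) \<Rightarrow> real" where
  "PhiTB_cond V E T B p q A H =
     PhiTB V E T B p q (\<lambda>\<omega>. A \<omega> \<and> H \<omega>) / PhiTB V E T B p q H"

definition edge_set_dist :: "nat \<Rightarrow> int list set \<Rightarrow> int list set set \<Rightarrow> real" where
  "edge_set_dist d e S = Inf {real_of_int (l1 d x y) | x y f. f \<in> S \<and> x \<in> e \<and> y \<in> f}"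

end

theory Submission
  imports Defs "HOL-Library.Transitive_Closure_Table"
begin


definition shift :: "int list \<Rightarrow> nat \<Rightarrow> int list" where
  "shift v i = v[i := v!i + 1]"

definition pset :: "nat \<Rightarrow> (nat \<Rightarrow> int) \<Rightarrow> (nat \<Rightarrow> int) \<Rightarrow> int list set" where
  "pset d lo hi = {v. length v = d \<and> (\<forall>i<d. lo i \<le> v!i \<and> v!i \<le> hi i)}"

definition LA :: "nat \<Rightarrow> (int list \<times> int list) set" where
  "LA d = {(u,v). lattice_adj d u v}"

lemma length_shift[simp]: "length (shift v i) = length v"
  by (simp add: shift_def)

lemma nth_shift: "i < length v \<Longrightarrow> shift v i ! k = (if k = i then v!i + 1 else v!k)"
  by (simp add: shift_def nth_list_update)

lemma l1_shift: assumes "length u = d" "i < d" shows "l1 d u (shift u i) = 1"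
proof -
  have "l1 d u (shift u i) = (\<Sum>k<d. if k = i then 1 else 0)"
    unfolding l1_def using assms by (intro sum.cong) (auto simp: nth_shift)
  also have "\<dots> = 1" using assms by simp
  finally show ?thesis .
qed

lemma l1_sym: "l1 d u v = l1 d v u"
  unfolding l1_def by (intro sum.cong) auto

lemma l1_nonneg: "l1 d u v \<ge> 0"
  unfolding l1_def by (intro sum_nonneg) auto

lemma l1_eq1_imp:
  assumes "length u = d" "length v = d" "l1 d u v = 1"
  shows "\<exists>i<d. v = shift u i \<or> u = shift v i"
proof -
  have "\<exists>i<d. u!i \<noteq> v!i"
  proof (rule ccontr)
    assume "\<not> ?thesis"
    hence "l1 d u v = 0" unfolding l1_def by (intro sum.neutral) auto
    with assms show False by simp
  qed
  then obtain i where i: "i < d" "u!i \<noteq> v!i" by blast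
  have split: "l1 d u v = \<bar>u!i - v!i\<bar> + (\<Sum>k\<in>{..<d}-{i}. \<bar>u!k - v!k\<bar>)"
    unfolding l1_def using i by (subst sum.remove[of _ i]) auto
  have rest: "(\<Sum>k\<in>{..<d}-{i}. \<bar>u!k - v!k\<bar>) \<ge> 0" by (intro sum_nonneg) auto
  have ai: "\<bar>u!i - v!i\<bar> \<ge> 1" using i by auto
  have r0: "(\<Sum>k\<in>{..<d}-{i}. \<bar>u!k - v!k\<bar>) = 0" and a1: "\<bar>u!i - v!i\<bar> = 1"
    using split rest ai assms(3) by linarith+
  have others: "\<forall>k\<in>{..<d}-{i}. u!k = v!k"
    using r0 by (subst (asm) sum_nonneg_eq_0_iff) auto
  show ?thesis
  proof (cases "v!i = u!i + 1")
    case True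
    have "v = shift u i"
      by (rule nth_equalityI) (use assms i others True in \<open>auto simp: nth_shift\<close>)
    with i show ?thesis by blast
  next
    case False
    hence "u!i = v!i + 1" using a1 by auto
    hence "u = shift v i"
      by (intro nth_equalityI) (use assms i others in \<open>auto simp: nth_shift\<close>)
    with i show ?thesis by blast
  qed
qed

lemma ladj_iff: "lattice_adj d u v \<longleftrightarrow> length u = d \<and> length v = d \<and> (\<exists>i<d. v = shift u i \<or> u = shift v i)"
proof
  assume "lattice_adj d u v"
  thus "length u = d \<and> length v = d \<and> (\<exists>i<d. v = shift u i \<or> u = shift v i)"
    unfolding lattice_adj_def lattice_pt_def using l1_eq1_imp by blast
next
  assume a: "length u = d \<and> length v = d \<and> (\<exists>i<d. v = shift u i \<or> u = shift v i)"
  then obtain i where "i<d" "v = shift u i \<or> u = shift v i" by blast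
  thus "lattice_adj d u v" using a l1_shift[of u d i] l1_shift[of v d i] l1_sym[of d u v]
    unfolding lattice_adj_def lattice_pt_def by auto
qed

lemma ladj_sym: "lattice_adj d u v \<Longrightarrow> lattice_adj d v u"
  unfolding ladj_iff by blast

lemma shift_neq: "i < length v \<Longrightarrow> shift v i \<noteq> v"
  by (metis nth_shift add_cancel_left_right one_neq_zero)

lemma ladj_neq: "lattice_adj d u v \<Longrightarrow> u \<noteq> v"
  unfolding ladj_iff using shift_neq by metis

lemma ladj_coord: assumes "lattice_adj d u v" "k < d" shows "\<bar>u!k - v!k\<bar> \<le> 1"
proof -
  obtain i where i: "i < d" "v = shift u i \<or> u = shift v i" and l: "length u = d" "length v = d"
    using assms(1) unfolding ladj_iff by blast
  show ?thesis
  proof (cases "v = shift u i")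
    case True thus ?thesis using i l assms(2) nth_shift[of i u k] by auto
  next
    case False hence "u = shift v i" using i by blast
    thus ?thesis using i l assms(2) nth_shift[of i v k] by auto
  qed
qed

lemma LA_sym: "(u,v) \<in> LA d \<Longrightarrow> (v,u) \<in> LA d"
  unfolding LA_def using ladj_sym by auto


definition unshift :: "int list \<Rightarrow> nat \<Rightarrow> int list" where
  "unshift v i = v[i := v!i - 1]"

lemma length_unshift[simp]: "length (unshift v i) = length v"
  by (simp add: unshift_def)

lemma nth_unshift: "i < length v \<Longrightarrow> unshift v i ! k = (if k = i then v!i - 1 else v!k)"
  by (simp add: unshift_def nth_list_update)

lemma shift_unshift: "i < length v \<Longrightarrow> shift (unshift v i) i = v"
  unfolding shift_def unshift_def by simp

lemma unshift_shift: "i < length v \<Longrightarrow> unshift (shift v i) i = v"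
  unfolding shift_def unshift_def by simp

lemma ladj_shift: "length u = d \<Longrightarrow> i < d \<Longrightarrow> lattice_adj d u (shift u i)"
  unfolding ladj_iff by auto

lemma dist_upd:
  assumes "length u = d" "i < d"
  shows "(\<Sum>k<d. nat \<bar>(u[i:=a])!k - v!k\<bar>) + nat \<bar>u!i - v!i\<bar> = (\<Sum>k<d. nat \<bar>u!k - v!k\<bar>) + nat \<bar>a - v!i\<bar>"
proof -
  have "(\<Sum>k<d. nat \<bar>(u[i:=a])!k - v!k\<bar>) = nat \<bar>a - v!i\<bar> + (\<Sum>k\<in>{..<d}-{i}. nat \<bar>(u[i:=a])!k - v!k\<bar>)"
    using assms by (subst sum.remove[of _ i]) auto
  also have "(\<Sum>k\<in>{..<d}-{i}. nat \<bar>(u[i:=a])!k - v!k\<bar>) = (\<Sum>k\<in>{..<d}-{i}. nat \<bar>u!k - v!k\<bar>)"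
    by (intro sum.cong) auto
  finally have 1: "(\<Sum>k<d. nat \<bar>(u[i:=a])!k - v!k\<bar>) = nat \<bar>a - v!i\<bar> + (\<Sum>k\<in>{..<d}-{i}. nat \<bar>u!k - v!k\<bar>)" .
  have 2: "(\<Sum>k<d. nat \<bar>u!k - v!k\<bar>) = nat \<bar>u!i - v!i\<bar> + (\<Sum>k\<in>{..<d}-{i}. nat \<bar>u!k - v!k\<bar>)"
    using assms by (subst sum.remove[of _ i]) auto
  show ?thesis using 1 2 by simp
qed

lemma pset_path:
  assumes "u \<in> pset d lo hi" "v \<in> pset d lo hi"
  shows "(u,v) \<in> (LA d \<inter> pset d lo hi \<times> pset d lo hi)\<^sup>*"
proof -
  let ?P = "pset d lo hi"
  have "\<forall>u. u \<in> ?P \<longrightarrow> (\<Sum>k<d. nat \<bar>u!k - v!k\<bar>) = n \<longrightarrow> (u,v) \<in> (LA d \<inter> ?P \<times> ?P)\<^sup>*" for n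
  proof (induction n)
    case 0
    show ?case
    proof (intro allI impI)
      fix u assume u: "u \<in> ?P" "(\<Sum>k<d. nat \<bar>u!k - v!k\<bar>) = 0"
      have "\<forall>k\<in>{..<d}. nat \<bar>u!k - v!k\<bar> = 0" using u(2) by simp
      hence "u = v" using u(1) assms(2) unfolding pset_def by (intro nth_equalityI) auto
      thus "(u,v) \<in> (LA d \<inter> ?P \<times> ?P)\<^sup>*" by simp
    qed
  next
    case (Suc n)
    show ?case
    proof (intro allI impI)
      fix u assume u: "u \<in> ?P" "(\<Sum>k<d. nat \<bar>u!k - v!k\<bar>) = Suc n"
      have lu: "length u = d" and lv: "length v = d" using u(1) assms(2) unfolding pset_def by auto
      have "\<exists>i<d. u!i \<noteq> v!i"
      proof (rule ccontr)
        assume "\<not> ?thesis"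
        hence "(\<Sum>k<d. nat \<bar>u!k - v!k\<bar>) = 0" by (intro sum.neutral) auto
        with u(2) show False by simp
      qed
      then obtain i where i: "i < d" "u!i \<noteq> v!i" by blast
      show "(u,v) \<in> (LA d \<inter> ?P \<times> ?P)\<^sup>*"
      proof (cases "u!i < v!i")
        case True
        define w where "w = shift u i"
        have w1: "w = u[i := u!i + 1]" unfolding w_def shift_def by simp
        have wP: "w \<in> ?P" using u(1) assms(2) i True unfolding pset_def w1
          by (auto simp: nth_list_update)
        have "(\<Sum>k<d. nat \<bar>w!k - v!k\<bar>) + nat \<bar>u!i - v!i\<bar> = Suc n + nat \<bar>u!i + 1 - v!i\<bar>"
          using dist_upd[OF lu i(1), of "u!i + 1" v] u(2) unfolding w1 by simp
        hence "(\<Sum>k<d. nat \<bar>w!k - v!k\<bar>) = n" using True by linarith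
        hence "(w,v) \<in> (LA d \<inter> ?P \<times> ?P)\<^sup>*" using Suc.IH wP by blast
        moreover have "(u,w) \<in> LA d \<inter> ?P \<times> ?P"
          using u(1) wP ladj_shift[OF lu i(1)] unfolding LA_def w_def by auto
        ultimately show ?thesis by (meson converse_rtrancl_into_rtrancl)
      next
        case False
        define w where "w = unshift u i"
        have w1: "w = u[i := u!i - 1]" unfolding w_def unshift_def by simp
        have wP: "w \<in> ?P" using u(1) assms(2) i False unfolding pset_def w1
          by (auto simp: nth_list_update)
        have "(\<Sum>k<d. nat \<bar>w!k - v!k\<bar>) + nat \<bar>u!i - v!i\<bar> = Suc n + nat \<bar>u!i - 1 - v!i\<bar>"
          using dist_upd[OF lu i(1), of "u!i - 1" v] u(2) unfolding w1 by simp
        hence "(\<Sum>k<d. nat \<bar>w!k - v!k\<bar>) = n" using False i(2) by linarith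
        hence "(w,v) \<in> (LA d \<inter> ?P \<times> ?P)\<^sup>*" using Suc.IH wP by blast
        moreover have "(u,w) \<in> LA d \<inter> ?P \<times> ?P"
        proof -
          have "u = shift w i" unfolding w_def using shift_unshift i lu by simp
          hence "lattice_adj d w u" using ladj_shift[of w d i] lu i by simp
          thus ?thesis using u(1) wP ladj_sym unfolding LA_def by auto
        qed
        ultimately show ?thesis by (meson converse_rtrancl_into_rtrancl)
      qed
    qed
  qed
  thus ?thesis using assms(1) by blast
qed


lemma sum_upd:
  fixes f :: "nat \<Rightarrow> int \<Rightarrow> 'b::comm_monoid_add"
  assumes "length u = d" "i < d"
  shows "(\<Sum>k<d. f k ((u[i:=a])!k)) + f i (u!i) = (\<Sum>k<d. f k (u!k)) + f i a"
proof -
  have "(\<Sum>k<d. f k ((u[i:=a])!k)) = f i a + (\<Sum>k\<in>{..<d}-{i}. f k ((u[i:=a])!k))"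
    using assms by (subst sum.remove[of _ i]) auto
  also have "(\<Sum>k\<in>{..<d}-{i}. f k ((u[i:=a])!k)) = (\<Sum>k\<in>{..<d}-{i}. f k (u!k))"
    by (intro sum.cong) auto
  finally have 1: "(\<Sum>k<d. f k ((u[i:=a])!k)) = f i a + (\<Sum>k\<in>{..<d}-{i}. f k (u!k))" .
  have 2: "(\<Sum>k<d. f k (u!k)) = f i (u!i) + (\<Sum>k\<in>{..<d}-{i}. f k (u!k))"
    using assms by (subst sum.remove[of _ i]) auto
  show ?thesis using 1 2 by (simp add: ac_simps)
qed

primrec gf :: "nat \<Rightarrow> (nat \<Rightarrow> int) \<Rightarrow> int list set set \<Rightarrow> nat \<Rightarrow> int list \<Rightarrow> bool" where
  "gf d lo X 0 v = False"
| "gf d lo X (Suc n) v = (if (\<exists>k<d. lo k < v!k)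
     then (gf d lo X n (unshift v (GREATEST k. k<d \<and> lo k < v!k)) \<noteq>
           ({unshift v (GREATEST k. k<d \<and> lo k < v!k), v} \<in> X))
     else False)"

definition Nlo :: "nat \<Rightarrow> (nat \<Rightarrow> int) \<Rightarrow> int list \<Rightarrow> nat" where
  "Nlo d lo v = (\<Sum>k<d. nat (v!k - lo k))"

definition gcob :: "nat \<Rightarrow> (nat \<Rightarrow> int) \<Rightarrow> int list set set \<Rightarrow> int list \<Rightarrow> bool" where
  "gcob d lo X v = gf d lo X (Nlo d lo v) v"

lemma Nlo_unshift:
  assumes "length v = d" "k < d" "lo k < v!k"
  shows "Nlo d lo v = Suc (Nlo d lo (unshift v k))"
proof -
  have "Nlo d lo (unshift v k) + nat (v!k - lo k) = Nlo d lo v + nat (v!k - 1 - lo k)"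
    unfolding Nlo_def unshift_def using sum_upd[OF assms(1,2), of "\<lambda>k x. nat (x - lo k)" "v!k - 1"]
    by simp
  thus ?thesis using assms(3) by linarith
qed

lemma gcob_step:
  assumes "length v = d" "k < d" "lo k < v!k" "\<And>j. j < d \<Longrightarrow> k < j \<Longrightarrow> \<not> lo j < v!j"
  shows "gcob d lo X v = (gcob d lo X (unshift v k) \<noteq> ({unshift v k, v} \<in> X))"
proof -
  have G: "(GREATEST j. j<d \<and> lo j < v!j) = k"
    by (rule Greatest_equality) (use assms in \<open>auto simp: not_less[symmetric]\<close>)
  have ex: "\<exists>j<d. lo j < v!j" using assms by blast
  show ?thesis
    unfolding gcob_def Nlo_unshift[of v d k lo, OF assms(1-3)] gf.simps(2) G using ex by simp
qed

lemma shift_comm: "i \<noteq> j \<Longrightarrow> shift (shift v i) j = shift (shift v j) i"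
  unfolding shift_def by (simp add: list_update_swap nth_list_update)

lemma shift_unshift_comm: "i \<noteq> j \<Longrightarrow> shift (unshift v j) i = unshift (shift v i) j"
  unfolding shift_def unshift_def by (simp add: list_update_swap nth_list_update)

definition sqcond :: "nat \<Rightarrow> int list set \<Rightarrow> int list set set \<Rightarrow> bool" where
  "sqcond d P X \<longleftrightarrow> (\<forall>v i j. i < d \<longrightarrow> j < d \<longrightarrow> i \<noteq> j \<longrightarrow> v \<in> P \<longrightarrow> shift v i \<in> P \<longrightarrow>
      shift v j \<in> P \<longrightarrow> shift (shift v i) j \<in> P \<longrightarrow>
      (({v, shift v i} \<in> X) = ({v, shift v j} \<in> X)) =
      (({shift v i, shift (shift v i) j} \<in> X) = ({shift v j, shift (shift v i) j} \<in> X)))"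

lemma coboundary_aux:
  assumes sq: "sqcond d (pset d lo hi) X"
  shows "\<forall>v. v \<in> pset d lo hi \<longrightarrow> Nlo d lo v = n \<longrightarrow> (\<forall>i<d. shift v i \<in> pset d lo hi \<longrightarrow>
           gcob d lo X (shift v i) = (gcob d lo X v \<noteq> ({v, shift v i} \<in> X)))"
proof (induction n rule: less_induct)
  case (less n)
  let ?P = "pset d lo hi"
  show ?case
  proof (intro allI impI)
    fix v i assume vP: "v \<in> ?P" and Nv: "Nlo d lo v = n" and i: "i < d" and svP: "shift v i \<in> ?P"
    define v' where "v' = shift v i"
    have lv: "length v = d" using vP unfolding pset_def by auto
    have lv': "length v' = d" using lv unfolding v'_def by simp
    have v'i: "v'!i = v!i + 1" unfolding v'_def using nth_shift[of i v i] lv i by simp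
    have v'o: "\<And>j. j \<noteq> i \<Longrightarrow> v'!j = v!j" unfolding v'_def using nth_shift[of i v] lv i by simp
    have loi: "lo i \<le> v!i" using vP i unfolding pset_def by auto
    have sqa: "\<And>v i j. i < d \<Longrightarrow> j < d \<Longrightarrow> i \<noteq> j \<Longrightarrow> v \<in> ?P \<Longrightarrow> shift v i \<in> ?P \<Longrightarrow>
      shift v j \<in> ?P \<Longrightarrow> shift (shift v i) j \<in> ?P \<Longrightarrow>
      (({v, shift v i} \<in> X) = ({v, shift v j} \<in> X)) =
      (({shift v i, shift (shift v i) j} \<in> X) = ({shift v j, shift (shift v i) j} \<in> X))"
      using sq unfolding sqcond_def by blast
    define Pr where "Pr = (\<lambda>j. j < d \<and> lo j < v'!j)"
    have Pri: "Pr i" unfolding Pr_def using i v'i loi by simp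
    define k where "k = (GREATEST j. Pr j)"
    have Prk: "Pr k" unfolding k_def by (rule GreatestI_nat[of Pr i d, OF Pri]) (auto simp: Pr_def)
    have ik: "i \<le> k" unfolding k_def by (rule Greatest_le_nat[of Pr i d, OF Pri]) (auto simp: Pr_def)
    have above: "\<And>j. j < d \<Longrightarrow> k < j \<Longrightarrow> \<not> lo j < v'!j"
    proof -
      fix j assume "j < d" "k < j"
      show "\<not> lo j < v'!j"
      proof
        assume "lo j < v'!j"
        hence "Pr j" unfolding Pr_def using \<open>j<d\<close> by simp
        hence "j \<le> k" unfolding k_def by (rule Greatest_le_nat[of Pr j d]) (auto simp: Pr_def)
        with \<open>k<j\<close> show False by simp
      qed
    qed
    have kd: "k < d" and lok: "lo k < v'!k" using Prk unfolding Pr_def by auto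
    show "gcob d lo X (shift v i) = (gcob d lo X v \<noteq> ({v, shift v i} \<in> X))"
    proof (cases "k = i")
      case True
      have "unshift v' i = v" unfolding v'_def using unshift_shift lv i by simp
      hence "gcob d lo X v' = (gcob d lo X v \<noteq> ({v, v'} \<in> X))"
        using gcob_step[OF lv' kd lok above, of X] True by (simp add: insert_commute)
      thus ?thesis unfolding v'_def .
    next
      case False
      hence ik': "i < k" using ik by simp
      have vk: "v!k = v'!k" using v'o False by simp
      have lokv: "lo k < v!k" using lok vk by simp
      have abovev: "\<And>j. j < d \<Longrightarrow> k < j \<Longrightarrow> \<not> lo j < v!j" using above v'o ik' by fastforce
      define u where "u = unshift v k"
      define u' where "u' = unshift v' k"
      have u'u: "u' = shift u i" unfolding u'_def u_def v'_def using shift_unshift_comm False by simp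
      have vu: "v = shift u k" unfolding u_def using shift_unshift lv kd by simp
      have v'u': "v' = shift u' k" unfolding u'_def using shift_unshift lv' kd by simp
      have lu: "length u = d" using lv unfolding u_def by simp
      have uP: "u \<in> ?P" using vP lokv kd unfolding pset_def u_def
        by (auto simp: nth_unshift)
      have u'P: "u' \<in> ?P" using svP lok kd unfolding pset_def u'_def v'_def[symmetric]
        by (auto simp: nth_unshift)
      have Nu: "Nlo d lo u < n" using Nlo_unshift[of v d k lo, OF lv kd lokv] Nv unfolding u_def by simp
      have IH0: "\<forall>i<d. shift u i \<in> ?P \<longrightarrow> gcob d lo X (shift u i) = (gcob d lo X u \<noteq> ({u, shift u i} \<in> X))"
        using less.IH[OF Nu] uP by blast
      have IH: "gcob d lo X u' = (gcob d lo X u \<noteq> ({u, u'} \<in> X))"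
        using IH0 i u'P unfolding u'u by blast
      have g1: "gcob d lo X v = (gcob d lo X u \<noteq> ({u, v} \<in> X))"
        using gcob_step[OF lv kd lokv abovev, of X] unfolding u_def by simp
      have g2: "gcob d lo X v' = (gcob d lo X u' \<noteq> ({u', v'} \<in> X))"
        using gcob_step[OF lv' kd lok above, of X] unfolding u'_def by simp
      have s1: "shift u i \<in> ?P" using u'P u'u by simp
      have s2: "shift u k \<in> ?P" using vP vu by simp
      have s3: "shift (shift u i) k \<in> ?P" using svP v'u' u'u unfolding v'_def by simp
      have sqi: "(({u, shift u i} \<in> X) = ({u, shift u k} \<in> X)) =
          (({shift u i, shift (shift u i) k} \<in> X) = ({shift u k, shift (shift u i) k} \<in> X))"
        using sqa[OF i kd _ uP s1 s2 s3] False by simp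
      have sq': "(({u, u'} \<in> X) = ({u, v} \<in> X)) = (({u', v'} \<in> X) = ({v, v'} \<in> X))"
        using sqi u'u vu v'u' by simp
      have "gcob d lo X v' = (gcob d lo X v \<noteq> ({v, v'} \<in> X))"
        using IH g1 g2 sq' by argo
      thus ?thesis unfolding v'_def .
    qed
  qed
qed

lemma coboundary:
  assumes "sqcond d (pset d lo hi) X"
  shows "\<exists>g::int list \<Rightarrow> bool. \<forall>v i. v \<in> pset d lo hi \<longrightarrow> i < d \<longrightarrow> shift v i \<in> pset d lo hi \<longrightarrow>
            (({v, shift v i} \<in> X) \<longleftrightarrow> g v \<noteq> g (shift v i))"
proof -
  have "\<forall>v i. v \<in> pset d lo hi \<longrightarrow> i < d \<longrightarrow> shift v i \<in> pset d lo hi \<longrightarrow>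
            (({v, shift v i} \<in> X) \<longleftrightarrow> gcob d lo X v \<noteq> gcob d lo X (shift v i))"
  proof (intro allI impI)
    fix v i assume vP: "v \<in> pset d lo hi" and i: "i < d" and sP: "shift v i \<in> pset d lo hi"
    have "v \<in> pset d lo hi \<longrightarrow> Nlo d lo v = Nlo d lo v \<longrightarrow> (\<forall>i<d. shift v i \<in> pset d lo hi \<longrightarrow>
           gcob d lo X (shift v i) = (gcob d lo X v \<noteq> ({v, shift v i} \<in> X)))"
      using coboundary_aux[OF assms, of "Nlo d lo v"] by (rule spec)
    hence "\<forall>i<d. shift v i \<in> pset d lo hi \<longrightarrow>
           gcob d lo X (shift v i) = (gcob d lo X v \<noteq> ({v, shift v i} \<in> X))" using vP by simp
    hence "gcob d lo X (shift v i) = (gcob d lo X v \<noteq> ({v, shift v i} \<in> X))" using i sP by simp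
    thus "({v, shift v i} \<in> X) = (gcob d lo X v \<noteq> gcob d lo X (shift v i))" by argo
  qed
  thus ?thesis by (rule exI[of _ "gcob d lo X"])
qed


definition near :: "nat \<Rightarrow> int list set \<Rightarrow> int list set \<Rightarrow> bool" where
  "near d f g \<longleftrightarrow> (\<forall>a\<in>f. \<forall>b\<in>g. \<forall>i<d. \<bar>a!i - b!i\<bar> \<le> 1)"

definition bdry :: "nat \<Rightarrow> int list set \<Rightarrow> int list set \<Rightarrow> int list set set" where
  "bdry d A B0 = {{a,b} | a b. a \<in> A \<and> b \<in> B0 \<and> lattice_adj d a b}"

definition NB :: "nat \<Rightarrow> int list set set \<Rightarrow> (int list set \<times> int list set) set" where
  "NB d F = {(f,g). near d f g} \<inter> F \<times> F"

lemma near_sym: "near d f g \<Longrightarrow> near d g f"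
  unfolding near_def by (metis abs_minus_commute)

lemma sq_coord:
  assumes "length v = d" "i < d" "j < d" "i \<noteq> j" "k < d"
  shows "v!k = v!k + 0"
    and "shift v i ! k = v!k + (if k = i then 1 else 0)"
    and "shift v j ! k = v!k + (if k = j then 1 else 0)"
    and "shift (shift v i) j ! k = v!k + (if k = i then 1 else 0) + (if k = j then 1 else 0)"
proof -
  show "v!k = v!k + 0" by simp
  show "shift v i ! k = v!k + (if k = i then 1 else 0)" using nth_shift[of i v k] assms by simp
  show "shift v j ! k = v!k + (if k = j then 1 else 0)" using nth_shift[of j v k] assms by simp
  have "shift (shift v i) j ! k = shift v i ! k + (if k = j then 1 else 0)"
    using nth_shift[of j "shift v i" k] assms by simp
  also have "\<dots> = v!k + (if k = i then 1 else 0) + (if k = j then 1 else 0)"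
    using nth_shift[of i v k] assms by simp
  finally show "shift (shift v i) j ! k = v!k + (if k = i then 1 else 0) + (if k = j then 1 else 0)" .
qed

lemma sq_close:
  assumes "length v = d" "i < d" "j < d" "i \<noteq> j"
    and "p \<in> {v, shift v i, shift v j, shift (shift v i) j}" "q \<in> {v, shift v i, shift v j, shift (shift v i) j}"
    and "k < d"
  shows "\<bar>p!k - q!k\<bar> \<le> 1"
proof -
  note c = sq_coord[OF assms(1-4) assms(7)]
  have w: "w!k = v!k \<or> w!k = v!k + 1" if "w \<in> {v, shift v i, shift v j, shift (shift v i) j}" for w
    using that c assms(4) by (cases "k = i"; cases "k = j") auto
  show ?thesis using w[OF assms(5)] w[OF assms(6)] by auto
qed

lemma near_sq:
  assumes "length v = d" "i < d" "j < d" "i \<noteq> j"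
    and "f \<subseteq> {v, shift v i, shift v j, shift (shift v i) j}" "g \<subseteq> {v, shift v i, shift v j, shift (shift v i) j}"
  shows "near d f g"
  unfolding near_def using sq_close[OF assms(1-4)] assms(5,6) by blast

lemma pset_len: "v \<in> pset d lo hi \<Longrightarrow> length v = d"
  unfolding pset_def by simp

lemma bdry_iff:
  assumes "A \<inter> B0 = {}" and closedB: "\<And>b v. b \<in> B0 \<Longrightarrow> v \<in> P \<Longrightarrow> lattice_adj d b v \<Longrightarrow> v \<in> A \<union> B0"
    and "A \<subseteq> P" "p \<in> P" "q \<in> P" "lattice_adj d p q"
  shows "{p,q} \<in> bdry d A B0 \<longleftrightarrow> ((p \<in> B0) \<noteq> (q \<in> B0))"
proof
  assume "{p,q} \<in> bdry d A B0"
  then obtain a b where ab: "{p,q} = {a,b}" "a \<in> A" "b \<in> B0" unfolding bdry_def by blast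
  have "a \<notin> B0" using ab assms(1) by blast
  thus "(p \<in> B0) \<noteq> (q \<in> B0)" using ab ladj_neq[OF assms(6)] by (auto simp: doubleton_eq_iff)
next
  assume h: "(p \<in> B0) \<noteq> (q \<in> B0)"
  show "{p,q} \<in> bdry d A B0"
  proof (cases "p \<in> B0")
    case True
    hence "q \<in> A" using h closedB[OF True assms(5,6)] by blast
    thus ?thesis unfolding bdry_def using True ladj_sym[OF assms(6)] by (auto simp: insert_commute intro!: exI)
  next
    case False
    hence "q \<in> B0" using h by simp
    hence "p \<in> A" using False closedB[OF _ assms(4) ladj_sym[OF assms(6)]] by blast
    thus ?thesis unfolding bdry_def using \<open>q \<in> B0\<close> assms(6) by blast
  qed
qed


lemma g_adj:
  assumes g: "\<forall>v i. v \<in> P \<longrightarrow> i < d \<longrightarrow> shift v i \<in> P \<longrightarrow> (({v, shift v i} \<in> X) \<longleftrightarrow> g v \<noteq> g (shift v i))"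
    and "p \<in> P" "q \<in> P" "lattice_adj d p q"
  shows "({p,q} \<in> X) \<longleftrightarrow> g p \<noteq> g q"
proof -
  obtain i where i: "i < d" "q = shift p i \<or> p = shift q i" using assms(4) unfolding ladj_iff by blast
  show ?thesis
  proof (cases "q = shift p i")
    case True thus ?thesis using g assms(2,3) i(1) by blast
  next
    case False hence "p = shift q i" using i by blast
    thus ?thesis using g assms(2,3) i(1) by (metis insert_commute)
  qed
qed

lemma timar:
  fixes A B0 :: "int list set"
  assumes AP: "A \<subseteq> pset d lo hi" and BP: "B0 \<subseteq> pset d lo hi" and disj: "A \<inter> B0 = {}"
   and closedB: "\<And>b v. b \<in> B0 \<Longrightarrow> v \<in> pset d lo hi \<Longrightarrow> lattice_adj d b v \<Longrightarrow> v \<in> A \<union> B0"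
   and connA: "\<And>a1 a2. a1 \<in> A \<Longrightarrow> a2 \<in> A \<Longrightarrow> (a1,a2) \<in> (LA d \<inter> A \<times> A)\<^sup>*"
   and connB: "\<And>b1 b2. b1 \<in> B0 \<Longrightarrow> b2 \<in> B0 \<Longrightarrow> (b1,b2) \<in> (LA d \<inter> B0 \<times> B0)\<^sup>*"
   and f1: "f1 \<in> bdry d A B0" and f2: "f2 \<in> bdry d A B0"
  shows "(f1,f2) \<in> (NB d (bdry d A B0))\<^sup>*"
proof (rule ccontr)
  let ?P = "pset d lo hi"
  let ?bd = "bdry d A B0"
  assume nc: "(f1,f2) \<notin> (NB d ?bd)\<^sup>*"
  define X where "X = {f \<in> ?bd. (f1,f) \<in> (NB d ?bd)\<^sup>*}"
  have Xbd: "X \<subseteq> ?bd" unfolding X_def by blast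
  have Xclosed: "g \<in> X" if "f \<in> X" "g \<in> ?bd" "near d f g" for f g
  proof -
    have "(f,g) \<in> NB d ?bd" using that Xbd unfolding NB_def by blast
    thus ?thesis using that unfolding X_def by (blast intro: rtrancl_into_rtrancl)
  qed
  have bdi: "{p,q} \<in> ?bd \<longleftrightarrow> ((p \<in> B0) \<noteq> (q \<in> B0))" if "p \<in> ?P" "q \<in> ?P" "lattice_adj d p q" for p q
    by (rule bdry_iff[OF disj closedB AP that])
  have sq: "sqcond d ?P X"
    unfolding sqcond_def
  proof (intro allI impI)
    fix v i j assume i: "i < d" and j: "j < d" and ij: "i \<noteq> j" and v0: "v \<in> ?P"
      and v1: "shift v i \<in> ?P" and v2: "shift v j \<in> ?P" and v3: "shift (shift v i) j \<in> ?P"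
    have lv: "length v = d" using v0 by (rule pset_len)
    have a01: "lattice_adj d v (shift v i)" using ladj_shift lv i by blast
    have a02: "lattice_adj d v (shift v j)" using ladj_shift lv j by blast
    have a13: "lattice_adj d (shift v i) (shift (shift v i) j)" using ladj_shift lv j by simp
    have a23: "lattice_adj d (shift v j) (shift (shift v i) j)"
      using ladj_shift[of "shift v j" d i] lv i shift_comm[OF ij, of v] by simp
    let ?S = "{v, shift v i, shift v j, shift (shift v i) j}"
    let ?e01 = "{v, shift v i}" and ?e02 = "{v, shift v j}"
      and ?e13 = "{shift v i, shift (shift v i) j}" and ?e23 = "{shift v j, shift (shift v i) j}"
    have nr: "near d f g" if "f \<subseteq> ?S" "g \<subseteq> ?S" for f g
      by (rule near_sq[OF lv i j ij that])
    have b01: "?e01 \<in> ?bd \<longleftrightarrow> ((v \<in> B0) \<noteq> (shift v i \<in> B0))" using bdi[OF v0 v1 a01] .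
    have b02: "?e02 \<in> ?bd \<longleftrightarrow> ((v \<in> B0) \<noteq> (shift v j \<in> B0))" using bdi[OF v0 v2 a02] .
    have b13: "?e13 \<in> ?bd \<longleftrightarrow> ((shift v i \<in> B0) \<noteq> (shift (shift v i) j \<in> B0))" using bdi[OF v1 v3 a13] .
    have b23: "?e23 \<in> ?bd \<longleftrightarrow> ((shift v j \<in> B0) \<noteq> (shift (shift v i) j \<in> B0))" using bdi[OF v2 v3 a23] .
    show "((?e01 \<in> X) = (?e02 \<in> X)) = ((?e13 \<in> X) = (?e23 \<in> X))"
    proof (cases "?e01 \<in> X \<or> ?e02 \<in> X \<or> ?e13 \<in> X \<or> ?e23 \<in> X")
      case True
      then obtain e0 where e0: "e0 \<in> X" "e0 \<subseteq> ?S" by blast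
      have eq: "(e \<in> X) = (e \<in> ?bd)" if "e \<subseteq> ?S" for e
        using Xclosed[OF e0(1) _ nr[OF e0(2) that]] Xbd by blast
      have "(?e01 \<in> X) = (?e01 \<in> ?bd)" "(?e02 \<in> X) = (?e02 \<in> ?bd)"
        "(?e13 \<in> X) = (?e13 \<in> ?bd)" "(?e23 \<in> X) = (?e23 \<in> ?bd)" by (rule eq; blast)+
      thus ?thesis using b01 b02 b13 b23 by argo
    next
      case False thus ?thesis by blast
    qed
  qed
  obtain g :: "int list \<Rightarrow> bool" where g: "\<forall>v i. v \<in> ?P \<longrightarrow> i < d \<longrightarrow> shift v i \<in> ?P \<longrightarrow> (({v, shift v i} \<in> X) \<longleftrightarrow> g v \<noteq> g (shift v i))"
    using coboundary[OF sq] by blast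
  have ga: "({p,q} \<in> X) \<longleftrightarrow> g p \<noteq> g q" if "p \<in> ?P" "q \<in> ?P" "lattice_adj d p q" for p q
    by (rule g_adj[OF g that])
  have pathA: "g a1 = g a2" if "(a1,a2) \<in> (LA d \<inter> A \<times> A)\<^sup>*" for a1 a2
    using that
  proof (induction rule: rtrancl_induct)
    case base thus ?case by simp
  next
    case (step y z)
    hence yz: "y \<in> A" "z \<in> A" "lattice_adj d y z" unfolding LA_def by auto
    have "y \<notin> B0" "z \<notin> B0" using yz disj by auto
    hence "{y,z} \<notin> ?bd" using bdi[of y z] yz AP by auto
    hence "{y,z} \<notin> X" using Xbd by blast
    hence "g y = g z" using ga[of y z] yz AP by auto
    thus ?case using step.IH by simp
  qed
  have pathB: "g b1 = g b2" if "(b1,b2) \<in> (LA d \<inter> B0 \<times> B0)\<^sup>*" for b1 b2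
    using that
  proof (induction rule: rtrancl_induct)
    case base thus ?case by simp
  next
    case (step y z)
    hence yz: "y \<in> B0" "z \<in> B0" "lattice_adj d y z" unfolding LA_def by auto
    hence "{y,z} \<notin> ?bd" using bdi[of y z] BP by auto
    hence "{y,z} \<notin> X" using Xbd by blast
    hence "g y = g z" using ga[of y z] yz BP by auto
    thus ?case using step.IH by simp
  qed
  obtain a1 b1 where ab1: "f1 = {a1,b1}" "a1 \<in> A" "b1 \<in> B0" "lattice_adj d a1 b1"
    using f1 unfolding bdry_def by blast
  obtain a2 b2 where ab2: "f2 = {a2,b2}" "a2 \<in> A" "b2 \<in> B0" "lattice_adj d a2 b2"
    using f2 unfolding bdry_def by blast
  have "f1 \<in> X" unfolding X_def using f1 by simp
  hence "g a1 \<noteq> g b1" using ga[of a1 b1] ab1 AP BP by auto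
  moreover have "f2 \<notin> X" unfolding X_def using nc by simp
  hence "g a2 = g b2" using ga[of a2 b2] ab2 AP BP by auto
  moreover have "g a1 = g a2" using pathA connA ab1 ab2 by blast
  moreover have "g b1 = g b2" using pathB connB ab1 ab2 by blast
  ultimately show False by simp
qed


lemma adj_rel_sym: "(u,v) \<in> adj_rel F \<Longrightarrow> (v,u) \<in> adj_rel F"
proof -
  assume "(u,v) \<in> adj_rel F"
  hence "{u,v} \<in> F" "u \<noteq> v" unfolding adj_rel_def by auto
  moreover have "{u,v} = {v,u}" by (rule insert_commute)
  ultimately show "(v,u) \<in> adj_rel F" unfolding adj_rel_def by auto
qed

lemma rtrancl_adj_sym: "(u,v) \<in> (adj_rel F)\<^sup>* \<Longrightarrow> (v,u) \<in> (adj_rel F)\<^sup>*"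
proof (induction rule: rtrancl_induct)
  case base thus ?case by simp
next
  case (step y z)
  have "(z,y) \<in> adj_rel F" using step(2) by (rule adj_rel_sym)
  thus ?case using step(3) by (rule converse_rtrancl_into_rtrancl)
qed

lemma adj_rel_mono: "F \<subseteq> G \<Longrightarrow> adj_rel F \<subseteq> adj_rel G"
  unfolding adj_rel_def by auto

lemma rtrancl_adj_mono: "F \<subseteq> G \<Longrightarrow> (u,v) \<in> (adj_rel F)\<^sup>* \<Longrightarrow> (u,v) \<in> (adj_rel G)\<^sup>*"
  using rtrancl_mono[OF adj_rel_mono] by (rule subsetD)

lemma connects_sym1: "connects F T B \<Longrightarrow> connects F B T"
proof -
  assume "connects F T B"
  then obtain t b where "t \<in> T" "b \<in> B" "(t,b) \<in> (adj_rel F)\<^sup>*" unfolding connects_def by blast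
  moreover have "(b,t) \<in> (adj_rel F)\<^sup>*" using calculation(3) by (rule rtrancl_adj_sym)
  ultimately show "connects F B T" unfolding connects_def by blast
qed

lemma connects_sym: "connects F T B \<longleftrightarrow> connects F B T"
  using connects_sym1 by blast

lemma first_exit:
  assumes "(u,v) \<in> R\<^sup>*" "u \<in> X" "v \<notin> X"
  shows "\<exists>a b. (u,a) \<in> (R \<inter> X \<times> X)\<^sup>* \<and> a \<in> X \<and> b \<notin> X \<and> (a,b) \<in> R"
  using assms
proof (induction rule: converse_rtrancl_induct)
  case base thus ?case by simp
next
  case (step y z)
  show ?case
  proof (cases "z \<in> X")
    case True
    then obtain a b where "(z,a) \<in> (R \<inter> X \<times> X)\<^sup>*" "a \<in> X" "b \<notin> X" "(a,b) \<in> R" using step by blast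
    moreover have "(y,z) \<in> R \<inter> X \<times> X" using step True by blast
    ultimately show ?thesis by (blast intro: converse_rtrancl_into_rtrancl)
  next
    case False thus ?thesis using step by blast
  qed
qed

lemma rtrancl_restrict_reach:
  assumes "(a,b) \<in> (R \<inter> X \<times> X)\<^sup>*" "\<And>v. (a,v) \<in> R\<^sup>* \<Longrightarrow> v \<in> Y"
  shows "(a,b) \<in> (R \<inter> (X \<inter> Y) \<times> (X \<inter> Y))\<^sup>*"
  using assms(1)
proof (induction rule: rtrancl_induct)
  case base thus ?case by simp
next
  case (step y z)
  have "(a,y) \<in> R\<^sup>*" using step(1) rtrancl_mono[of "R \<inter> X \<times> X" R] by blast
  hence ay: "(a,z) \<in> R\<^sup>*" "(a,y) \<in> R\<^sup>*" using step(2) by (auto intro: rtrancl_into_rtrancl)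
  hence "y \<in> Y" "z \<in> Y" using assms(2) by auto
  thus ?case using step by (blast intro: rtrancl_into_rtrancl)
qed

lemma rtrancl_insert_edge:
  assumes "(t,b) \<in> (adj_rel (insert e F))\<^sup>*"
  shows "(t,b) \<in> (adj_rel F)\<^sup>* \<or> (\<exists>x y. e = {x,y} \<and> (t,x) \<in> (adj_rel F)\<^sup>* \<and> (y,b) \<in> (adj_rel F)\<^sup>*)"
  using assms
proof (induction rule: rtrancl_induct)
  case base thus ?case by simp
next
  case (step v w)
  have vw: "{v,w} \<in> insert e F" "v \<noteq> w" using step(2) unfolding adj_rel_def by auto
  show ?case
  proof (cases "{v,w} \<in> F")
    case True
    hence "(v,w) \<in> adj_rel F" using vw unfolding adj_rel_def by auto
    thus ?thesis using step(3) by (blast intro: rtrancl_into_rtrancl)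
  next
    case False
    hence e: "e = {v,w}" using vw by auto
    from step(3) show ?thesis
    proof
      assume "(t,v) \<in> (adj_rel F)\<^sup>*"
      thus ?thesis using e by blast
    next
      assume "\<exists>x y. e = {x,y} \<and> (t,x) \<in> (adj_rel F)\<^sup>* \<and> (y,v) \<in> (adj_rel F)\<^sup>*"
      then obtain x y where xy: "e = {x,y}" "(t,x) \<in> (adj_rel F)\<^sup>*" "(y,v) \<in> (adj_rel F)\<^sup>*" by blast
      have "v = x \<or> v = y" "w = x \<or> w = y" using xy(1) e by (auto simp: doubleton_eq_iff)
      show ?thesis
      proof (cases "w = y")
        case True thus ?thesis using xy by blast
      next
        case False
        hence "w = x" using \<open>w = x \<or> w = y\<close> by simp
        hence "(t,w) \<in> (adj_rel F)\<^sup>*" using xy by simp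
        thus ?thesis using e by blast
      qed
    qed
  qed
qed

definition reachT :: "'v set set \<Rightarrow> 'v set \<Rightarrow> 'v set" where
  "reachT F T = {v. \<exists>t\<in>T. (t,v) \<in> (adj_rel F)\<^sup>*}"

lemma reachT_closed: "v \<in> reachT F T \<Longrightarrow> (v,w) \<in> (adj_rel F)\<^sup>* \<Longrightarrow> w \<in> reachT F T"
  unfolding reachT_def by (blast intro: rtrancl_trans)

lemma reachT_back: "v \<in> reachT F T \<Longrightarrow> (w,v) \<in> (adj_rel F)\<^sup>* \<Longrightarrow> w \<in> reachT F T"
  using reachT_closed rtrancl_adj_sym by metis

lemma reachT_disj: assumes "\<not> connects F T B" shows "reachT F T \<inter> reachT F B = {}"
proof (rule equals0I)
  fix v assume "v \<in> reachT F T \<inter> reachT F B"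
  then obtain t b where tb: "t \<in> T" "(t,v) \<in> (adj_rel F)\<^sup>*" "b \<in> B" "(b,v) \<in> (adj_rel F)\<^sup>*"
    unfolding reachT_def by blast
  have "(v,b) \<in> (adj_rel F)\<^sup>*" using tb(4) by (rule rtrancl_adj_sym)
  hence "(t,b) \<in> (adj_rel F)\<^sup>*" using tb(2) by (rule rtrancl_trans[rotated])
  hence "connects F T B" unfolding connects_def using tb(1,3) by blast
  thus False using assms by contradiction
qed

lemma cut_endpoints:
  assumes cut: "is_cut E C T B" and eC: "e \<in> C"
  shows "\<exists>x y. e = {x,y} \<and> x \<in> reachT (E - C) T \<and> y \<in> reachT (E - C) B"
proof -
  have sep: "separates E C T B" and min: "\<And>S'. S' \<subset> C \<Longrightarrow> \<not> separates E S' T B"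
    using cut unfolding is_cut_def by auto
  have CE: "C \<subseteq> E" and nc: "\<not> connects (E - C) T B" using sep unfolding separates_def by auto
  have "C - {e} \<subset> C" using eC by blast
  hence "\<not> separates E (C - {e}) T B" using min by blast
  moreover have "C - {e} \<subseteq> E" using CE by blast
  ultimately have "connects (E - (C - {e})) T B" unfolding separates_def by blast
  moreover have "E - (C - {e}) = insert e (E - C)" using eC CE by auto
  ultimately have "connects (insert e (E - C)) T B" by simp
  then obtain t b where tb: "t \<in> T" "b \<in> B" "(t,b) \<in> (adj_rel (insert e (E - C)))\<^sup>*"
    unfolding connects_def by blast
  have "(t,b) \<notin> (adj_rel (E - C))\<^sup>*" using nc tb(1,2) unfolding connects_def by blast
  then obtain x y where xy: "e = {x,y}" "(t,x) \<in> (adj_rel (E - C))\<^sup>*" "(y,b) \<in> (adj_rel (E - C))\<^sup>*"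
    using rtrancl_insert_edge[OF tb(3)] by blast
  have "(b,y) \<in> (adj_rel (E - C))\<^sup>*" using xy(3) by (rule rtrancl_adj_sym)
  hence "x \<in> reachT (E - C) T" "y \<in> reachT (E - C) B" unfolding reachT_def using tb xy(2) by blast+
  thus ?thesis using xy(1) by blast
qed

lemma cut_sym: "is_cut E C T B \<longleftrightarrow> is_cut E C B T"
  unfolding is_cut_def separates_def using connects_sym by metis

lemma pivotal_sym: "pivotal E T B \<omega> = pivotal E B T \<omega>"
  unfolding pivotal_def using connects_sym by metis

lemma cuts_of_sym: "cuts_of E T B \<omega> = cuts_of E B T \<omega>"
  unfolding cuts_of_def using cut_sym by metis


definition cube :: "nat \<Rightarrow> int list \<Rightarrow> int \<Rightarrow> int list set" where
  "cube d c \<rho> = pset d (\<lambda>i. c!i - \<rho>) (\<lambda>i. c!i + \<rho>)"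

definition surf :: "nat \<Rightarrow> int list \<Rightarrow> int \<Rightarrow> int list set" where
  "surf d c \<rho> = {v \<in> cube d c \<rho>. \<exists>i<d. \<bar>v!i - c!i\<bar> = \<rho>}"

lemma cube_mem: "v \<in> cube d c \<rho> \<longleftrightarrow> length v = d \<and> (\<forall>i<d. \<bar>v!i - c!i\<bar> \<le> \<rho>)"
  unfolding cube_def pset_def by (auto simp: abs_le_iff)

lemma LAS_sym: "(a,b) \<in> (LA d \<inter> S \<times> S)\<^sup>* \<Longrightarrow> (b,a) \<in> (LA d \<inter> S \<times> S)\<^sup>*"
proof (induction rule: rtrancl_induct)
  case base thus ?case by simp
next
  case (step y z)
  have "(z,y) \<in> LA d \<inter> S \<times> S" using step(2) LA_sym by blast
  thus ?case using step(3) by (rule converse_rtrancl_into_rtrancl)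
qed

lemma LAS_mono: "S \<subseteq> S' \<Longrightarrow> (a,b) \<in> (LA d \<inter> S \<times> S)\<^sup>* \<Longrightarrow> (a,b) \<in> (LA d \<inter> S' \<times> S')\<^sup>*"
proof -
  assume "S \<subseteq> S'"
  hence "LA d \<inter> S \<times> S \<subseteq> LA d \<inter> S' \<times> S'" by blast
  thus "(a,b) \<in> (LA d \<inter> S \<times> S)\<^sup>* \<Longrightarrow> (a,b) \<in> (LA d \<inter> S' \<times> S')\<^sup>*" using rtrancl_mono by blast
qed

lemma exit_surf:
  assumes "u \<in> cube d c \<rho>" "lattice_adj d u w" "w \<notin> cube d c \<rho>"
  shows "u \<in> surf d c \<rho>"
proof -
  have lu: "length u = d" "length w = d" using assms(2) unfolding ladj_iff by auto
  obtain k where k: "k < d" "\<bar>w!k - c!k\<bar> > \<rho>" using assms(3) lu cube_mem by (auto simp: not_le)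
  have "\<bar>u!k - w!k\<bar> \<le> 1" using ladj_coord[OF assms(2) k(1)] .
  moreover have "\<bar>u!k - c!k\<bar> \<le> \<rho>" using assms(1) k(1) cube_mem by blast
  moreover have "u!k \<noteq> w!k \<or> True" by simp
  ultimately have "\<bar>u!k - c!k\<bar> = \<rho>"
  proof -
    assume a: "\<bar>u!k - w!k\<bar> \<le> 1" "\<bar>u!k - c!k\<bar> \<le> \<rho>"
    have "\<bar>w!k - c!k\<bar> \<le> \<bar>u!k - c!k\<bar> + 1" using a(1) by linarith
    thus ?thesis using k(2) a(2) by linarith
  qed
  thus ?thesis unfolding surf_def using assms(1) k(1) by blast
qed

definition face :: "nat \<Rightarrow> int list \<Rightarrow> int \<Rightarrow> nat \<Rightarrow> int \<Rightarrow> int list set" where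
  "face d c \<rho> i s = pset d (\<lambda>k. if k = i then c!i + s else c!k - \<rho>) (\<lambda>k. if k = i then c!i + s else c!k + \<rho>)"

lemma face_sub: assumes "i < d" "\<bar>s\<bar> = \<rho>" shows "face d c \<rho> i s \<subseteq> surf d c \<rho>"
proof
  fix v assume v: "v \<in> face d c \<rho> i s"
  have "length v = d" and b: "\<forall>k<d. (if k = i then c!i + s else c!k - \<rho>) \<le> v!k \<and> v!k \<le> (if k = i then c!i + s else c!k + \<rho>)"
    using v unfolding face_def pset_def by auto
  have "\<forall>k<d. \<bar>v!k - c!k\<bar> \<le> \<rho>"
  proof (intro allI impI)
    fix k assume "k < d"
    thus "\<bar>v!k - c!k\<bar> \<le> \<rho>" using b assms(2) by (cases "k = i") (auto simp: abs_le_iff)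
  qed
  moreover have "\<bar>v!i - c!i\<bar> = \<rho>" using b assms by auto
  ultimately show "v \<in> surf d c \<rho>" unfolding surf_def cube_mem using \<open>length v = d\<close> assms(1) by blast
qed

lemma face_conn:
  assumes "i < d" "\<bar>s\<bar> = \<rho>" "a \<in> face d c \<rho> i s" "b \<in> face d c \<rho> i s"
  shows "(a,b) \<in> (LA d \<inter> surf d c \<rho> \<times> surf d c \<rho>)\<^sup>*"
proof -
  have "(a,b) \<in> (LA d \<inter> face d c \<rho> i s \<times> face d c \<rho> i s)\<^sup>*"
    using pset_path assms(3,4) unfolding face_def by blast
  thus ?thesis using LAS_mono[OF face_sub[OF assms(1,2)]] by blast
qed

lemma in_face:
  assumes "v \<in> cube d c \<rho>" "i < d" "v!i - c!i = s"
  shows "v \<in> face d c \<rho> i s"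
  using assms unfolding face_def pset_def cube_mem by (auto simp: abs_le_iff)

lemma corner_face:
  assumes "length c = d" "i < d" "j < d" "i \<noteq> j" "\<bar>s\<bar> = \<rho>" "\<bar>t\<bar> = \<rho>" "\<rho> \<ge> 0"
  shows "c[i := c!i + s, j := c!j + t] \<in> face d c \<rho> i s"
proof -
  let ?z = "c[i := c!i + s, j := c!j + t]"
  have "?z \<in> cube d c \<rho>" unfolding cube_mem using assms by (auto simp: nth_list_update)
  moreover have "?z!i - c!i = s" using assms by (simp add: nth_list_update)
  ultimately show ?thesis using in_face assms(2) by blast
qed

lemma surf_conn0:
  assumes d2: "d \<ge> 2" and lc: "length c = d" and r0: "\<rho> \<ge> 0" and u: "u \<in> surf d c \<rho>"
  shows "(u, c[0 := c!0 + \<rho>]) \<in> (LA d \<inter> surf d c \<rho> \<times> surf d c \<rho>)\<^sup>*"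
proof -
  let ?R = "(LA d \<inter> surf d c \<rho> \<times> surf d c \<rho>)\<^sup>*"
  let ?z0 = "c[0 := c!0 + \<rho>]"
  have d0: "0 < d" and d1: "1 < d" using d2 by auto
  obtain i where i: "i < d" "\<bar>u!i - c!i\<bar> = \<rho>" and uc: "u \<in> cube d c \<rho>" using u unfolding surf_def by blast
  define s where "s = u!i - c!i"
  have s: "\<bar>s\<bar> = \<rho>" using i s_def by simp
  have uF: "u \<in> face d c \<rho> i s" using in_face[OF uc i(1)] s_def by simp
  have z0F: "?z0 \<in> face d c \<rho> 0 \<rho>"
  proof -
    have "?z0 \<in> cube d c \<rho>" unfolding cube_mem using lc r0 by (auto simp: nth_list_update)
    moreover have "?z0!0 - c!0 = \<rho>" using lc d0 by (simp add: nth_list_update)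
    ultimately show ?thesis using in_face d0 by blast
  qed
  have r: "\<bar>\<rho>\<bar> = \<rho>" using r0 by simp
  have rm: "\<bar>-\<rho>\<bar> = \<rho>" using r0 by simp
  show ?thesis
  proof (cases "i = 0")
    case False
    define z where "z = c[i := c!i + s, 0 := c!0 + \<rho>]"
    have z1: "z \<in> face d c \<rho> i s" unfolding z_def by (rule corner_face[OF lc i(1) d0 False s r r0])
    have z2: "z \<in> face d c \<rho> 0 \<rho>"
    proof -
      have "z = c[0 := c!0 + \<rho>, i := c!i + s]" unfolding z_def using False by (simp add: list_update_swap)
      thus ?thesis using corner_face[OF lc d0 i(1) _ r s r0] False by simp
    qed
    have "(u,z) \<in> ?R" by (rule face_conn[OF i(1) s uF z1])
    moreover have "(z,?z0) \<in> ?R" by (rule face_conn[OF d0 r z2 z0F])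
    ultimately show ?thesis by (rule rtrancl_trans)
  next
    case True
    show ?thesis
    proof (cases "s = \<rho>")
      case True
      thus ?thesis using face_conn[OF d0 r _ z0F] uF \<open>i = 0\<close> by simp
    next
      case False
      hence sm: "s = -\<rho>" using s by auto
      define z1 where "z1 = c[0 := c!0 + s, 1 := c!1 + \<rho>]"
      define z2 where "z2 = c[1 := c!1 + \<rho>, 0 := c!0 + \<rho>]"
      have z1a: "z1 \<in> face d c \<rho> 0 s" unfolding z1_def by (rule corner_face[OF lc d0 d1 _ s r r0]) simp
      have z1b: "z1 \<in> face d c \<rho> 1 \<rho>"
      proof -
        have "z1 = c[1 := c!1 + \<rho>, 0 := c!0 + s]" unfolding z1_def by (simp add: list_update_swap)
        thus ?thesis using corner_face[OF lc d1 d0 _ r s r0] by simp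
      qed
      have z2a: "z2 \<in> face d c \<rho> 1 \<rho>" unfolding z2_def by (rule corner_face[OF lc d1 d0 _ r r r0]) simp
      have z2b: "z2 \<in> face d c \<rho> 0 \<rho>"
      proof -
        have "z2 = c[0 := c!0 + \<rho>, 1 := c!1 + \<rho>]" unfolding z2_def by (simp add: list_update_swap)
        thus ?thesis using corner_face[OF lc d0 d1 _ r r r0] by simp
      qed
      have "(u,z1) \<in> ?R" using face_conn[OF d0 s _ z1a] uF \<open>i = 0\<close> by simp
      moreover have "(z1,z2) \<in> ?R" by (rule face_conn[OF d1 r z1b z2a])
      moreover have "(z2,?z0) \<in> ?R" by (rule face_conn[OF d0 r z2b z0F])
      ultimately show ?thesis by (meson rtrancl_trans)
    qed
  qed
qed

lemma surf_conn:
  assumes "d \<ge> 2" "length c = d" "\<rho> \<ge> 0" "u \<in> surf d c \<rho>" "v \<in> surf d c \<rho>"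
  shows "(u, v) \<in> (LA d \<inter> surf d c \<rho> \<times> surf d c \<rho>)\<^sup>*"
proof -
  have "(u, c[0 := c!0 + \<rho>]) \<in> (LA d \<inter> surf d c \<rho> \<times> surf d c \<rho>)\<^sup>*" using surf_conn0 assms(1-4) .
  moreover have "(v, c[0 := c!0 + \<rho>]) \<in> (LA d \<inter> surf d c \<rho> \<times> surf d c \<rho>)\<^sup>*" using surf_conn0 assms(1-3,5) .
  hence "(c[0 := c!0 + \<rho>], v) \<in> (LA d \<inter> surf d c \<rho> \<times> surf d c \<rho>)\<^sup>*" by (rule LAS_sym)
  ultimately show ?thesis by (rule rtrancl_trans)
qed


lemma edge_coord:
  assumes "f = {a0,b0}" "lattice_adj d a0 b0" "a \<in> f" "b \<in> f" "i < d"
  shows "\<bar>a!i - b!i\<bar> \<le> 1"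
proof -
  have "\<bar>a0!i - b0!i\<bar> \<le> 1" "\<bar>b0!i - a0!i\<bar> \<le> 1"
    using ladj_coord[OF assms(2,5)] by (auto simp: abs_minus_commute)
  thus ?thesis using assms(1,3,4) by auto
qed

lemma path_props:
  assumes "rtrancl_path (\<lambda>x y. (x,y) \<in> NB d F) x xs y" "x \<in> F"
    and edges: "\<And>f. f \<in> F \<Longrightarrow> \<exists>a b. f = {a,b} \<and> lattice_adj d a b"
  shows "set xs \<subseteq> F \<and> successively (near d) (x#xs) \<and> (\<forall>a\<in>x. \<forall>b\<in>y. \<forall>i<d. \<bar>a!i - b!i\<bar> \<le> int (length xs) + 1)"
  using assms(1,2)
proof (induction rule: rtrancl_path.induct)
  case (base x)
  obtain a0 b0 where "x = {a0,b0}" "lattice_adj d a0 b0" using edges[OF base] by blast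
  hence "\<forall>a\<in>x. \<forall>b\<in>x. \<forall>i<d. \<bar>a!i - b!i\<bar> \<le> 1" using edge_coord by blast
  thus ?case by simp
next
  case (step x z zs y)
  have xz: "near d x z" "z \<in> F" using step(1) unfolding NB_def by auto
  have IH: "set zs \<subseteq> F \<and> successively (near d) (z#zs) \<and> (\<forall>a\<in>z. \<forall>b\<in>y. \<forall>i<d. \<bar>a!i - b!i\<bar> \<le> int (length zs) + 1)"
    using step(3) xz(2) by blast
  obtain a0 b0 where z: "z = {a0,b0}" using edges[OF xz(2)] by blast
  have bound: "\<forall>a\<in>x. \<forall>b\<in>y. \<forall>i<d. \<bar>a!i - b!i\<bar> \<le> int (length (z#zs)) + 1"
  proof (intro ballI allI impI)
    fix a b i assume ab: "a \<in> x" "b \<in> y" "i < d"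
    have "a0 \<in> z" using z by simp
    have "\<bar>a!i - a0!i\<bar> \<le> 1" using xz(1) ab(1) \<open>a0 \<in> z\<close> ab(3) unfolding near_def by blast
    moreover have "\<bar>a0!i - b!i\<bar> \<le> int (length zs) + 1" using IH \<open>a0 \<in> z\<close> ab(2,3) by blast
    ultimately show "\<bar>a!i - b!i\<bar> \<le> int (length (z#zs)) + 1" by simp
  qed
  have "successively (near d) (x#z#zs)" using IH xz(1) by simp
  thus ?case using IH xz(2) bound by simp
qed

lemma chain_extract:
  assumes "(fs,fe) \<in> (NB d F)\<^sup>*" "fs \<in> F"
    and edges: "\<And>f. f \<in> F \<Longrightarrow> \<exists>a b. f = {a,b} \<and> lattice_adj d a b"
    and "a \<in> fs" "b \<in> fe" "i < d"
  shows "\<exists>cs. distinct cs \<and> cs \<noteq> [] \<and> hd cs = fs \<and> set cs \<subseteq> F \<and> successively (near d) cs \<and>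
             \<bar>a!i - b!i\<bar> \<le> int (length cs)"
proof -
  have "(\<lambda>x y. (x,y) \<in> NB d F)\<^sup>*\<^sup>* fs fe" using assms(1) by (simp add: rtranclp_rtrancl_eq)
  then obtain xs where "rtrancl_path (\<lambda>x y. (x,y) \<in> NB d F) fs xs fe"
    using rtranclp_eq_rtrancl_path by metis
  then obtain xs' where p: "rtrancl_path (\<lambda>x y. (x,y) \<in> NB d F) fs xs' fe" and dis: "distinct (fs # xs')"
    using rtrancl_path_distinct by metis
  have pp: "set xs' \<subseteq> F \<and> successively (near d) (fs#xs') \<and> (\<forall>a\<in>fs. \<forall>b\<in>fe. \<forall>i<d. \<bar>a!i - b!i\<bar> \<le> int (length xs') + 1)"
    using path_props[OF p assms(2) edges] by blast
  have bd: "\<bar>a!i - b!i\<bar> \<le> int (length xs') + 1" using pp assms(4,5,6) by blast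
  show ?thesis
    by (rule exI[of _ "fs # xs'"]) (use pp dis assms(2) bd in auto)
qed


lemma cube_pset: "cube d c r = pset d (\<lambda>i. c!i - r) (\<lambda>i. c!i + r)"
  by (simp add: cube_def)

lemma surf_cube: "surf d c r \<subseteq> cube d c r"
  unfolding surf_def by blast

lemma chain_generic:
  assumes d2: "d \<ge> 2" and lc: "length c0 = d" and r0: "r \<ge> 0"
    and AQ: "A \<subseteq> cube d c0 r" and BQ: "B0 \<subseteq> cube d c0 r" and disj: "A \<inter> B0 = {}"
    and closedB: "\<And>b v. b \<in> B0 \<Longrightarrow> v \<in> cube d c0 r \<Longrightarrow> lattice_adj d b v \<Longrightarrow> v \<in> A \<union> B0"
    and connA: "\<And>a1 a2. a1 \<in> A \<Longrightarrow> a2 \<in> A \<Longrightarrow> (a1,a2) \<in> (LA d \<inter> A \<times> A)\<^sup>*"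
    and connB: "\<And>b1 b2. b1 \<in> B0 \<Longrightarrow> b2 \<in> B0 \<Longrightarrow> (b1,b2) \<in> (LA d \<inter> B0 \<times> B0)\<^sup>*"
    and fs: "fs \<in> bdry d A B0" and aA: "aA \<in> A" "aA \<in> surf d c0 r" and bB: "bB \<in> B0" "bB \<in> surf d c0 r"
    and a0: "a0 \<in> fs" "\<forall>i<d. \<bar>a0!i - c0!i\<bar> \<le> r1"
  shows "\<exists>cs. distinct cs \<and> cs \<noteq> [] \<and> hd cs = fs \<and> set cs \<subseteq> bdry d A B0 \<and> successively (near d) cs \<and>
             r \<le> int (length cs) + r1"
proof -
  let ?S = "surf d c0 r"
  have "(aA, bB) \<in> (LA d \<inter> ?S \<times> ?S)\<^sup>*" by (rule surf_conn[OF d2 lc r0 aA(2) bB(2)])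
  moreover have "aA \<notin> B0" using aA disj by blast
  ultimately obtain p q where pq: "p \<notin> B0" "q \<in> B0" "(p,q) \<in> LA d \<inter> ?S \<times> ?S"
    using first_exit[of aA bB "LA d \<inter> ?S \<times> ?S" "- B0"] bB(1) by blast
  have pS: "p \<in> ?S" and adj: "lattice_adj d p q" using pq unfolding LA_def by auto
  have pQ: "p \<in> cube d c0 r" using pS surf_cube by blast
  have "p \<in> A" using closedB[OF pq(2) pQ ladj_sym[OF adj]] pq(1) by blast
  hence fe: "{p,q} \<in> bdry d A B0" unfolding bdry_def using pq(2) adj by blast
  obtain i where i: "i < d" "\<bar>p!i - c0!i\<bar> = r" using pS unfolding surf_def by blast
  have t: "(fs, {p,q}) \<in> (NB d (bdry d A B0))\<^sup>*"
    by (rule timar[OF AQ[unfolded cube_pset] BQ[unfolded cube_pset] disj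
          closedB[unfolded cube_pset] connA connB fs fe]) (auto simp: cube_pset)
  have edges: "\<And>f. f \<in> bdry d A B0 \<Longrightarrow> \<exists>a b. f = {a,b} \<and> lattice_adj d a b"
    unfolding bdry_def by blast
  obtain cs where cs: "distinct cs" "cs \<noteq> []" "hd cs = fs" "set cs \<subseteq> bdry d A B0" "successively (near d) cs"
      "\<bar>a0!i - p!i\<bar> \<le> int (length cs)"
    using chain_extract[OF t fs edges a0(1) _ i(1), of p] by auto
  have "\<bar>a0!i - c0!i\<bar> \<le> r1" using a0(2) i(1) by blast
  hence "r \<le> int (length cs) + r1" using cs(6) i(2) by linarith
  thus ?thesis using cs by blast
qed


lemma adj_LA: assumes "\<And>f. f \<in> F \<Longrightarrow> lattice_edge d f" "(u,v) \<in> adj_rel F" shows "(u,v) \<in> LA d"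
proof -
  have uv: "{u,v} \<in> F" "u \<noteq> v" using assms(2) unfolding adj_rel_def by auto
  obtain a b where ab: "{u,v} = {a,b}" "lattice_adj d a b" using assms(1)[OF uv(1)] unfolding lattice_edge_def by blast
  have "(u = a \<and> v = b) \<or> (u = b \<and> v = a)" using ab(1) uv(2) by (auto simp: doubleton_eq_iff)
  thus ?thesis using ab(2) ladj_sym unfolding LA_def by auto
qed

lemma cube_mono: assumes "r \<le> r'" shows "cube d c r \<subseteq> cube d c r'"
proof
  fix v assume "v \<in> cube d c r"
  thus "v \<in> cube d c r'" unfolding cube_mem using assms by (meson order_trans)
qed

lemma comp_conn:
  assumes "R \<subseteq> LA d" "a \<in> S" "S = {v \<in> X. (s,v) \<in> (R \<inter> X \<times> X)\<^sup>*}"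
  shows "(s,a) \<in> (LA d \<inter> S \<times> S)\<^sup>*"
proof -
  have "(s,a) \<in> (R \<inter> X \<times> X)\<^sup>*" using assms(2,3) by blast
  thus ?thesis
  proof (induction rule: rtrancl_induct)
    case base thus ?case by simp
  next
    case (step y z)
    have "y \<in> X" "z \<in> X" using step(2) by auto
    hence "y \<in> S" "z \<in> S" using step(1) step(2) assms(3) by (auto intro: rtrancl_into_rtrancl)
    moreover have "(y,z) \<in> LA d" using step(2) assms(1) by blast
    ultimately have "(y,z) \<in> LA d \<inter> S \<times> S" by blast
    with step(3) show ?case by (rule rtrancl_into_rtrancl)
  qed
qed

lemma comp_conn2:
  assumes "R \<subseteq> LA d" "s \<in> X" "S = {v \<in> X. (s,v) \<in> (R \<inter> X \<times> X)\<^sup>*}" "a1 \<in> S" "a2 \<in> S"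
  shows "(a1,a2) \<in> (LA d \<inter> S \<times> S)\<^sup>*"
proof -
  have "(s,a1) \<in> (LA d \<inter> S \<times> S)\<^sup>*" by (rule comp_conn[OF assms(1,4,3)])
  hence "(a1,s) \<in> (LA d \<inter> S \<times> S)\<^sup>*" by (rule LAS_sym)
  moreover have "(s,a2) \<in> (LA d \<inter> S \<times> S)\<^sup>*" by (rule comp_conn[OF assms(1,5,3)])
  ultimately show ?thesis by (rule rtrancl_trans)
qed

context
  fixes d :: nat and E :: "int list set set" and T B :: "int list set" and \<omega> C :: "int list set set"
    and e :: "int list set" and x y c0 :: "int list" and \<rho> :: int
  assumes d2: "d \<ge> 2"
    and Eedge: "\<And>f. f \<in> E \<Longrightarrow> lattice_edge d f"
    and \<omega>E: "\<omega> \<subseteq> E" and CE: "C \<subseteq> E" and C\<omega>: "C \<inter> \<omega> = {}"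
    and H: "\<not> connects \<omega> T B" and sepC: "\<not> connects (E - C) T B"
    and exy: "e = {x,y}" and eC: "e \<in> C"
    and xS: "x \<in> reachT (E - C) T" and yS: "y \<in> reachT (E - C) B"
    and lc: "length c0 = d"
    and QE: "\<And>a b. a \<in> cube d c0 \<rho> \<Longrightarrow> b \<in> cube d c0 \<rho> \<Longrightarrow> lattice_adj d a b \<Longrightarrow> {a,b} \<in> E"
    and TQ: "T \<inter> cube d c0 \<rho> = {}" and BQ: "B \<inter> cube d c0 \<rho> = {}"
    and piv: "\<forall>f\<in>pivotal E T B \<omega>. f \<noteq> e \<longrightarrow> (\<forall>a\<in>f. a \<notin> cube d c0 \<rho>)"
    and xc: "x \<in> cube d c0 1" and yc: "y \<in> cube d c0 1"
    and \<rho>1: "\<rho> \<ge> 1"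
begin

lemma STSB: "reachT (E - C) T \<inter> reachT (E - C) B = {}"
  using reachT_disj[OF sepC] .

lemma \<omega>EC: "\<omega> \<subseteq> E - C" using \<omega>E C\<omega> by blast

lemma ATsub: "reachT \<omega> T \<subseteq> reachT (E - C) T"
  unfolding reachT_def using rtrancl_adj_mono[OF \<omega>EC] by blast

lemma ABsub: "reachT \<omega> B \<subseteq> reachT (E - C) B"
  unfolding reachT_def using rtrancl_adj_mono[OF \<omega>EC] by blast

lemma ATAB: "reachT \<omega> T \<inter> reachT \<omega> B = {}"
  using reachT_disj[OF H] .

lemma \<omega>edge: "f \<in> \<omega> \<Longrightarrow> lattice_edge d f" using \<omega>E Eedge by blast

lemma ECedge: "f \<in> E - C \<Longrightarrow> lattice_edge d f" using Eedge by blast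

lemma safe:
  assumes "\<forall>f\<in>F. \<forall>a\<in>f. a \<notin> reachT \<omega> T"
  shows "\<not> connects (\<omega> \<union> F) T B"
proof
  assume "connects (\<omega> \<union> F) T B"
  then obtain t b where tb: "t \<in> T" "b \<in> B" "(t,b) \<in> (adj_rel (\<omega> \<union> F))\<^sup>*" unfolding connects_def by blast
  have "\<forall>v. (t,v) \<in> (adj_rel (\<omega> \<union> F))\<^sup>* \<longrightarrow> v \<in> reachT \<omega> T"
  proof (intro allI impI)
    fix v assume "(t,v) \<in> (adj_rel (\<omega> \<union> F))\<^sup>*"
    thus "v \<in> reachT \<omega> T"
    proof (induction rule: rtrancl_induct)
      case base thus ?case unfolding reachT_def using tb(1) by blast
    next
      case (step v w)
      have vw: "{v,w} \<in> \<omega> \<union> F" "v \<noteq> w" using step(2) unfolding adj_rel_def by auto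
      show ?case
      proof (cases "{v,w} \<in> \<omega>")
        case True
        hence "(v,w) \<in> adj_rel \<omega>" using vw(2) unfolding adj_rel_def by auto
        hence "(v,w) \<in> (adj_rel \<omega>)\<^sup>*" by blast
        thus ?thesis using reachT_closed step(3) by metis
      next
        case False
        hence "{v,w} \<in> F" using vw by blast
        hence "v \<notin> reachT \<omega> T" using assms by blast
        thus ?thesis using step(3) by contradiction
      qed
    qed
  qed
  hence "b \<in> reachT \<omega> T" using tb(3) by blast
  then obtain t' where "t' \<in> T" "(t',b) \<in> (adj_rel \<omega>)\<^sup>*" unfolding reachT_def by blast
  hence "connects \<omega> T B" unfolding connects_def using tb(2) by blast
  thus False using H by contradiction
qed

lemma pivot:
  assumes "a \<in> reachT \<omega> T" "b \<in> reachT \<omega> B" "{a,b} \<in> E"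
  shows "{a,b} \<in> pivotal E T B \<omega>"
proof -
  obtain t where t: "t \<in> T" "(t,a) \<in> (adj_rel \<omega>)\<^sup>*" using assms(1) unfolding reachT_def by blast
  obtain bb where bb: "bb \<in> B" "(bb,b) \<in> (adj_rel \<omega>)\<^sup>*" using assms(2) unfolding reachT_def by blast
  have ab: "a \<noteq> b" using assms(1,2) ATAB by blast
  have sub: "\<omega> \<subseteq> insert {a,b} \<omega>" by blast
  have "(t,a) \<in> (adj_rel (insert {a,b} \<omega>))\<^sup>*" using rtrancl_adj_mono[OF sub t(2)] .
  moreover have "(a,b) \<in> adj_rel (insert {a,b} \<omega>)" using ab unfolding adj_rel_def by auto
  moreover have "(b,bb) \<in> (adj_rel (insert {a,b} \<omega>))\<^sup>*"
    using rtrancl_adj_mono[OF sub rtrancl_adj_sym[OF bb(2)]] .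
  ultimately have "(t,bb) \<in> (adj_rel (insert {a,b} \<omega>))\<^sup>*" by (meson rtrancl_into_rtrancl rtrancl_trans)
  hence "connects (insert {a,b} \<omega>) T B" unfolding connects_def using t(1) bb(1) by blast
  thus ?thesis unfolding pivotal_def using assms(3) H by blast
qed

lemma ladj_xy: "lattice_adj d x y"
proof -
  have "e \<in> E" using eC CE by blast
  then obtain a b where ab: "e = {a,b}" "lattice_adj d a b" using Eedge unfolding lattice_edge_def by blast
  have xy: "x \<noteq> y" using xS yS STSB by blast
  have "(x = a \<and> y = b) \<or> (x = b \<and> y = a)" using ab(1) exy xy by (auto simp: doubleton_eq_iff)
  thus ?thesis using ab(2) ladj_sym by auto
qed


lemma xQ: "x \<in> cube d c0 \<rho>" using cube_mono[OF \<rho>1, of d c0] xc by (rule subsetD)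
lemma yQ: "y \<in> cube d c0 \<rho>" using cube_mono[OF \<rho>1, of d c0] yc by (rule subsetD)

lemma ECLA: "adj_rel (E - C) \<subseteq> LA d"
proof (rule subrelI)
  fix u v assume "(u,v) \<in> adj_rel (E - C)"
  thus "(u,v) \<in> LA d" using adj_LA[of "E - C" d u v] ECedge by blast
qed
lemma \<omega>LA: "adj_rel \<omega> \<subseteq> LA d"
proof (rule subrelI)
  fix u v assume "(u,v) \<in> adj_rel \<omega>"
  thus "(u,v) \<in> LA d" using adj_LA[of \<omega> d u v] \<omega>edge by blast
qed

lemma chain_AB:
  assumes y'B: "y' \<in> reachT \<omega> B" and y'Q: "y' \<in> cube d c0 \<rho>"
    and Adef: "A = {v \<in> cube d c0 \<rho>. (y', v) \<in> (adj_rel \<omega> \<inter> cube d c0 \<rho> \<times> cube d c0 \<rho>)\<^sup>*}"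
    and Bdef: "B0 = {v \<in> cube d c0 \<rho> - A. (x, v) \<in> (LA d \<inter> (cube d c0 \<rho> - A) \<times> (cube d c0 \<rho> - A))\<^sup>*}"
    and fs: "fs \<in> bdry d A B0" and a0: "a0 \<in> fs" "\<forall>i<d. \<bar>a0!i - c0!i\<bar> \<le> r1"
  shows "\<exists>cs. distinct cs \<and> cs \<noteq> [] \<and> hd cs = fs \<and> set cs \<subseteq> E \<and> set cs \<inter> \<omega> = {} \<and>
     successively (near d) cs \<and> (\<forall>f\<in>set cs. f \<noteq> e \<longrightarrow> (\<forall>a\<in>f. a \<notin> reachT \<omega> T)) \<and>
     (x \<notin> reachT \<omega> T \<longrightarrow> (\<forall>f\<in>set cs. \<forall>a\<in>f. a \<notin> reachT \<omega> T)) \<and> \<rho> \<le> int (length cs) + r1"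
proof -
  let ?Q = "cube d c0 \<rho>"
  have AQ: "A \<subseteq> ?Q" and BQ': "B0 \<subseteq> ?Q" and disj: "A \<inter> B0 = {}" using Adef Bdef by auto
  have AAB: "A \<subseteq> reachT \<omega> B"
  proof
    fix v assume "v \<in> A"
    hence "(y',v) \<in> (adj_rel \<omega> \<inter> ?Q \<times> ?Q)\<^sup>*" using Adef by blast
    hence "(y',v) \<in> (adj_rel \<omega>)\<^sup>*" by (rule subsetD[OF rtrancl_mono[OF Int_lower1]])
    thus "v \<in> reachT \<omega> B" by (rule reachT_closed[OF y'B])
  qed
  have ASB: "A \<subseteq> reachT (E - C) B" using AAB ABsub by blast
  have xnA: "x \<notin> A" using xS ASB STSB by blast
  have xB0: "x \<in> B0" using Bdef xQ xnA by blast
  have y'A: "y' \<in> A" using Adef y'Q by blast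
  have closedB: "v \<in> A \<union> B0" if "b \<in> B0" "v \<in> ?Q" "lattice_adj d b v" for b v
  proof (cases "v \<in> A")
    case False
    have "(x,b) \<in> (LA d \<inter> (?Q - A) \<times> (?Q - A))\<^sup>*" using that(1) Bdef by blast
    moreover have "(b,v) \<in> LA d \<inter> (?Q - A) \<times> (?Q - A)" using that False BQ' disj unfolding LA_def by blast
    ultimately have "(x,v) \<in> (LA d \<inter> (?Q - A) \<times> (?Q - A))\<^sup>*" by (rule rtrancl_into_rtrancl)
    thus ?thesis using Bdef that(2) False by blast
  qed simp
  have connA: "(a1,a2) \<in> (LA d \<inter> A \<times> A)\<^sup>*" if "a1 \<in> A" "a2 \<in> A" for a1 a2
    by (rule comp_conn2[OF \<omega>LA y'Q Adef that])
  have connB: "(b1,b2) \<in> (LA d \<inter> B0 \<times> B0)\<^sup>*" if "b1 \<in> B0" "b2 \<in> B0" for b1 b2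
  proof -
    have "x \<in> ?Q - A" using xQ xnA by blast
    thus ?thesis by (rule comp_conn2[OF order_refl _ Bdef that])
  qed
  obtain aA where aA: "aA \<in> A" "aA \<in> surf d c0 \<rho>"
  proof -
    obtain bb where bb: "bb \<in> B" "(bb,y') \<in> (adj_rel \<omega>)\<^sup>*" using y'B unfolding reachT_def by blast
    have "(y',bb) \<in> (adj_rel \<omega>)\<^sup>*" using bb(2) by (rule rtrancl_adj_sym)
    moreover have "bb \<notin> ?Q" using bb(1) BQ by blast
    ultimately obtain a w where aw: "(y',a) \<in> (adj_rel \<omega> \<inter> ?Q \<times> ?Q)\<^sup>*" "a \<in> ?Q" "w \<notin> ?Q" "(a,w) \<in> adj_rel \<omega>"
      using first_exit[of y' bb "adj_rel \<omega>" ?Q] y'Q by blast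
    have "a \<in> A" using aw(1,2) Adef by blast
    moreover have "lattice_adj d a w" using aw(4) \<omega>LA unfolding LA_def by blast
    hence "a \<in> surf d c0 \<rho>" using exit_surf aw(2,3) by blast
    ultimately show ?thesis using that by blast
  qed
  obtain bB where bB: "bB \<in> B0" "bB \<in> surf d c0 \<rho>"
  proof -
    obtain t where t: "t \<in> T" "(t,x) \<in> (adj_rel (E - C))\<^sup>*" using xS unfolding reachT_def by blast
    have "(x,t) \<in> (adj_rel (E - C))\<^sup>*" using t(2) by (rule rtrancl_adj_sym)
    moreover have "t \<notin> ?Q" using t(1) TQ by blast
    ultimately obtain a w where aw: "(x,a) \<in> (adj_rel (E - C) \<inter> ?Q \<times> ?Q)\<^sup>*" "a \<in> ?Q" "w \<notin> ?Q" "(a,w) \<in> adj_rel (E - C)"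
      using first_exit[of x t "adj_rel (E - C)" ?Q] xQ by blast
    have reach: "v \<in> - A" if "(x,v) \<in> (adj_rel (E - C))\<^sup>*" for v
    proof -
      have "v \<in> reachT (E - C) T" using reachT_closed[OF xS that] .
      thus ?thesis using ASB STSB by blast
    qed
    have xa1: "(x,a) \<in> (adj_rel (E - C) \<inter> (?Q \<inter> - A) \<times> (?Q \<inter> - A))\<^sup>*"
      by (rule rtrancl_restrict_reach[OF aw(1) reach])
    have sub: "adj_rel (E - C) \<inter> (?Q \<inter> - A) \<times> (?Q \<inter> - A) \<subseteq> LA d \<inter> (?Q - A) \<times> (?Q - A)"
      using ECLA by blast
    have "(x,a) \<in> (LA d \<inter> (?Q - A) \<times> (?Q - A))\<^sup>*" using subsetD[OF rtrancl_mono[OF sub] xa1] .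
    moreover have "a \<notin> A"
    proof -
      have "(x,a) \<in> (adj_rel (E - C))\<^sup>*" using aw(1) by (rule subsetD[OF rtrancl_mono[OF Int_lower1]])
      thus ?thesis using reach[of a] by blast
    qed
    ultimately have "a \<in> B0" using Bdef aw(2) by blast
    moreover have "lattice_adj d a w" using aw(4) ECLA unfolding LA_def by blast
    hence "a \<in> surf d c0 \<rho>" using exit_surf aw(2,3) by blast
    ultimately show ?thesis using that by blast
  qed
  have r0: "\<rho> \<ge> 0" using \<rho>1 by simp
  obtain cs where cs: "distinct cs" "cs \<noteq> []" "hd cs = fs" "set cs \<subseteq> bdry d A B0" "successively (near d) cs"
      "\<rho> \<le> int (length cs) + r1"
  proof -
    have "\<exists>cs. distinct cs \<and> cs \<noteq> [] \<and> hd cs = fs \<and> set cs \<subseteq> bdry d A B0 \<and> successively (near d) cs \<and>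
             \<rho> \<le> int (length cs) + r1"
    proof (rule chain_generic[OF d2 lc r0 AQ BQ' disj _ _ _ fs aA bB a0])
      fix b v assume "b \<in> B0" "v \<in> cube d c0 \<rho>" "lattice_adj d b v" thus "v \<in> A \<union> B0" by (rule closedB)
    next
      fix a1 a2 assume "a1 \<in> A" "a2 \<in> A" thus "(a1,a2) \<in> (LA d \<inter> A \<times> A)\<^sup>*" by (rule connA)
    next
      fix b1 b2 assume "b1 \<in> B0" "b2 \<in> B0" thus "(b1,b2) \<in> (LA d \<inter> B0 \<times> B0)\<^sup>*" by (rule connB)
    qed
    thus ?thesis using that by blast
  qed
  have props: "f \<in> E \<and> f \<notin> \<omega> \<and> (f \<noteq> e \<longrightarrow> (\<forall>a\<in>f. a \<notin> reachT \<omega> T)) \<and>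
       (x \<notin> reachT \<omega> T \<longrightarrow> (\<forall>a\<in>f. a \<notin> reachT \<omega> T))" if fb: "f \<in> bdry d A B0" for f
  proof -
    obtain a b where ab: "f = {a,b}" "a \<in> A" "b \<in> B0" "lattice_adj d a b" using fb unfolding bdry_def by blast
    have aQ: "a \<in> ?Q" and bQ: "b \<in> ?Q" using ab AQ BQ' by auto
    have fE: "f \<in> E" using QE[OF aQ bQ ab(4)] ab(1) by simp
    have fw: "f \<notin> \<omega>"
    proof
      assume "f \<in> \<omega>"
      hence "(a,b) \<in> adj_rel \<omega>" using ab ladj_neq unfolding adj_rel_def by auto
      hence "(a,b) \<in> adj_rel \<omega> \<inter> ?Q \<times> ?Q" using aQ bQ by blast
      moreover have "(y',a) \<in> (adj_rel \<omega> \<inter> ?Q \<times> ?Q)\<^sup>*" using ab(2) Adef by blast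
      ultimately have "(y',b) \<in> (adj_rel \<omega> \<inter> ?Q \<times> ?Q)\<^sup>*" by (meson rtrancl_into_rtrancl)
      hence "b \<in> A" using Adef bQ by blast
      thus False using ab(3) disj by blast
    qed
    have aT: "a \<notin> reachT \<omega> T" using ab(2) AAB ATAB by blast
    have ne: "\<forall>z\<in>f. z \<notin> reachT \<omega> T" if "f \<noteq> e"
    proof -
      have "b \<notin> reachT \<omega> T"
      proof
        assume bT: "b \<in> reachT \<omega> T"
        have "{b,a} \<in> E" using fE ab(1) by (simp add: insert_commute)
        hence "{b,a} \<in> pivotal E T B \<omega>" using pivot[OF bT] ab(2) AAB by blast
        hence "f \<in> pivotal E T B \<omega>" using ab(1) by (simp add: insert_commute)
        hence "a \<notin> ?Q" using piv that ab(1) by simp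
        thus False using aQ by contradiction
      qed
      thus ?thesis using aT ab(1) by blast
    qed
    have ne2: "\<forall>z\<in>f. z \<notin> reachT \<omega> T" if "x \<notin> reachT \<omega> T"
    proof (cases "f = e")
      case True
      have "y \<notin> reachT \<omega> T" using yS ATsub STSB by blast
      thus ?thesis using that True exy by blast
    next
      case False thus ?thesis using ne by blast
    qed
    show ?thesis using fE fw ne ne2 by blast
  qed
  have p1: "set cs \<subseteq> E" using cs(4) props by blast
  have p2: "set cs \<inter> \<omega> = {}" using cs(4) props by blast
  have p3: "\<forall>f\<in>set cs. f \<noteq> e \<longrightarrow> (\<forall>a\<in>f. a \<notin> reachT \<omega> T)"
  proof (intro ballI impI)
    fix f a assume "f \<in> set cs" "f \<noteq> e" "a \<in> f"
    thus "a \<notin> reachT \<omega> T" using cs(4) props[of f] by blast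
  qed
  have p4: "x \<notin> reachT \<omega> T \<longrightarrow> (\<forall>f\<in>set cs. \<forall>a\<in>f. a \<notin> reachT \<omega> T)"
  proof (intro impI ballI)
    fix f a assume "x \<notin> reachT \<omega> T" "f \<in> set cs" "a \<in> f"
    thus "a \<notin> reachT \<omega> T" using cs(4) props[of f] by blast
  qed
  show ?thesis using cs(1,2,3,5,6) p1 p2 p3 p4 by blast
qed


lemma caseP:
  assumes xT: "x \<in> reachT \<omega> T" and yB: "y \<in> reachT \<omega> B" and m: "int m \<le> \<rho> - 2"
  shows "\<exists>L. length L = m \<and> distinct L \<and> set L \<subseteq> E \<and> set L \<inter> \<omega> = {} \<and> successively (near d) L \<and>
     \<not> connects (\<omega> \<union> set L) T B"
proof -
  let ?Q = "cube d c0 \<rho>"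
  define A where "A = {v \<in> ?Q. (y, v) \<in> (adj_rel \<omega> \<inter> ?Q \<times> ?Q)\<^sup>*}"
  define B0 where "B0 = {v \<in> ?Q - A. (x, v) \<in> (LA d \<inter> (?Q - A) \<times> (?Q - A))\<^sup>*}"
  have yA: "y \<in> A" unfolding A_def using yQ by blast
  have xnA: "x \<notin> A"
  proof
    assume "x \<in> A"
    hence "(y,x) \<in> (adj_rel \<omega> \<inter> ?Q \<times> ?Q)\<^sup>*" unfolding A_def by blast
    hence "(y,x) \<in> (adj_rel \<omega>)\<^sup>*" by (rule subsetD[OF rtrancl_mono[OF Int_lower1]])
    hence "x \<in> reachT \<omega> B" by (rule reachT_closed[OF yB])
    thus False using xT ATAB by blast
  qed
  have xB0: "x \<in> B0" unfolding B0_def using xQ xnA by blast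
  have eyx: "e = {y,x}" using exy by (simp add: insert_commute)
  have fs: "e \<in> bdry d A B0" unfolding bdry_def eyx using yA xB0 ladj_sym[OF ladj_xy] by blast
  have a0: "x \<in> e" "\<forall>i<d. \<bar>x!i - c0!i\<bar> \<le> 1" using exy xc cube_mem by auto
  obtain cs where cs: "distinct cs" "cs \<noteq> []" "hd cs = e" "set cs \<subseteq> E" "set cs \<inter> \<omega> = {}"
     "successively (near d) cs" "\<forall>f\<in>set cs. f \<noteq> e \<longrightarrow> (\<forall>a\<in>f. a \<notin> reachT \<omega> T)" "\<rho> \<le> int (length cs) + 1"
    using chain_AB[OF yB yQ A_def B0_def fs a0] by blast
  obtain rest where rest: "cs = e # rest" using cs(2,3) by (cases cs) auto
  have enr: "e \<notin> set rest" "distinct rest" using cs(1) rest by auto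
  define L where "L = take m rest"
  have len: "length L = m" unfolding L_def using cs(8) m rest by simp
  have setL: "set L \<subseteq> set rest" unfolding L_def by (rule set_take_subset)
  have sr: "set rest \<subseteq> set cs" using rest by auto
  have succ: "successively (near d) rest" using cs(6) unfolding rest by (cases rest) auto
  have succL: "successively (near d) L"
  proof -
    have "successively (near d) (take m rest @ drop m rest)" using succ by simp
    thus ?thesis unfolding L_def successively_append_iff by blast
  qed
  have safeL: "\<forall>f\<in>set L. \<forall>a\<in>f. a \<notin> reachT \<omega> T"
  proof (intro ballI)
    fix f a assume "f \<in> set L" "a \<in> f"
    hence "f \<in> set cs" "f \<noteq> e" using setL sr enr(1) by auto
    thus "a \<notin> reachT \<omega> T" using cs(7) \<open>a \<in> f\<close> by blast
  qed
  have "distinct L" unfolding L_def using enr(2) by simp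
  moreover have "set L \<subseteq> E" using setL sr cs(4) by blast
  moreover have "set L \<inter> \<omega> = {}" using setL sr cs(5) by blast
  moreover have "\<not> connects (\<omega> \<union> set L) T B" by (rule safe[OF safeL])
  ultimately show ?thesis using len succL by blast
qed

lemma case1:
  assumes xT: "x \<notin> reachT \<omega> T" and y'B: "y' \<in> reachT \<omega> B" and y'Q': "y' \<in> cube d c0 \<rho>'"
    and r1: "1 \<le> \<rho>'" and r2: "\<rho>' \<le> \<rho>" and m: "int m \<le> \<rho> - \<rho>'"
  shows "\<exists>L. length L = m \<and> distinct L \<and> set L \<subseteq> E \<and> set L \<inter> \<omega> = {} \<and> successively (near d) L \<and>
     \<not> connects (\<omega> \<union> set L) T B"
proof -
  let ?Q = "cube d c0 \<rho>"
  let ?Q' = "cube d c0 \<rho>'"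
  have Q'Q: "?Q' \<subseteq> ?Q" by (rule cube_mono[OF r2])
  have y'Q: "y' \<in> ?Q" using y'Q' Q'Q by blast
  define A where "A = {v \<in> ?Q. (y', v) \<in> (adj_rel \<omega> \<inter> ?Q \<times> ?Q)\<^sup>*}"
  define B0 where "B0 = {v \<in> ?Q - A. (x, v) \<in> (LA d \<inter> (?Q - A) \<times> (?Q - A))\<^sup>*}"
  have y'A: "y' \<in> A" unfolding A_def using y'Q by blast
  have xnA: "x \<notin> A"
  proof
    assume "x \<in> A"
    hence "(y',x) \<in> (adj_rel \<omega> \<inter> ?Q \<times> ?Q)\<^sup>*" unfolding A_def by blast
    hence "(y',x) \<in> (adj_rel \<omega>)\<^sup>*" by (rule subsetD[OF rtrancl_mono[OF Int_lower1]])
    hence "x \<in> reachT \<omega> B" by (rule reachT_closed[OF y'B])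
    hence "x \<in> reachT (E - C) B" using ABsub by blast
    thus False using xS STSB by blast
  qed
  have xB0: "x \<in> B0" unfolding B0_def using xQ xnA by blast
  have xQ': "x \<in> ?Q'" using cube_mono[OF r1, of d c0] xc by (rule subsetD)
  have "(y',x) \<in> (LA d \<inter> ?Q' \<times> ?Q')\<^sup>*"
    using pset_path[of y' d "\<lambda>i. c0!i - \<rho>'" "\<lambda>i. c0!i + \<rho>'" x, OF y'Q'[unfolded cube_pset] xQ'[unfolded cube_pset]]
    unfolding cube_pset .
  moreover have "y' \<in> - B0" unfolding B0_def using y'A by blast
  moreover have "x \<notin> - B0" using xB0 by blast
  ultimately obtain p q where pq: "p \<in> - B0" "q \<notin> - B0" "(p,q) \<in> LA d \<inter> ?Q' \<times> ?Q'"
    using first_exit[of y' x "LA d \<inter> ?Q' \<times> ?Q'" "- B0"] by blast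
  have pQ': "p \<in> ?Q'" and qB: "q \<in> B0" and adj: "lattice_adj d p q" using pq unfolding LA_def by auto
  have pQ: "p \<in> ?Q" using pQ' Q'Q by blast
  have pA: "p \<in> A"
  proof (rule ccontr)
    assume pnA: "p \<notin> A"
    have "(x,q) \<in> (LA d \<inter> (?Q - A) \<times> (?Q - A))\<^sup>*" using qB unfolding B0_def by blast
    moreover have "(q,p) \<in> LA d \<inter> (?Q - A) \<times> (?Q - A)"
    proof -
      have "q \<in> ?Q - A" using qB unfolding B0_def by blast
      moreover have "(q,p) \<in> LA d" using ladj_sym[OF adj] unfolding LA_def by blast
      ultimately show ?thesis using pQ pnA by blast
    qed
    ultimately have "(x,p) \<in> (LA d \<inter> (?Q - A) \<times> (?Q - A))\<^sup>*" by (rule rtrancl_into_rtrancl)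
    hence "p \<in> B0" unfolding B0_def using pQ pnA by blast
    thus False using pq(1) by blast
  qed
  have fs: "{p,q} \<in> bdry d A B0" unfolding bdry_def using pA qB adj by blast
  have a0: "p \<in> {p,q}" "\<forall>i<d. \<bar>p!i - c0!i\<bar> \<le> \<rho>'" using pQ' cube_mem by auto
  obtain cs where cs: "distinct cs" "cs \<noteq> []" "set cs \<subseteq> E" "set cs \<inter> \<omega> = {}"
     "successively (near d) cs" "x \<notin> reachT \<omega> T \<longrightarrow> (\<forall>f\<in>set cs. \<forall>a\<in>f. a \<notin> reachT \<omega> T)"
     "\<rho> \<le> int (length cs) + \<rho>'"
  proof -
    from chain_AB[OF y'B y'Q A_def B0_def fs a0] obtain cs where
      "distinct cs \<and> cs \<noteq> [] \<and> hd cs = {p,q} \<and> set cs \<subseteq> E \<and> set cs \<inter> \<omega> = {} \<and>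
     successively (near d) cs \<and> (\<forall>f\<in>set cs. f \<noteq> e \<longrightarrow> (\<forall>a\<in>f. a \<notin> reachT \<omega> T)) \<and>
     (x \<notin> reachT \<omega> T \<longrightarrow> (\<forall>f\<in>set cs. \<forall>a\<in>f. a \<notin> reachT \<omega> T)) \<and> \<rho> \<le> int (length cs) + \<rho>'"
      by (elim exE)
    thus ?thesis using that by (elim conjE) simp
  qed
  define L where "L = take m cs"
  have len: "length L = m" unfolding L_def using cs(7) m by simp
  have setL: "set L \<subseteq> set cs" unfolding L_def by (rule set_take_subset)
  have succL: "successively (near d) L"
  proof -
    have "successively (near d) (take m cs @ drop m cs)" using cs(5) by simp
    thus ?thesis unfolding L_def successively_append_iff by blast
  qed
  have safeL: "\<forall>f\<in>set L. \<forall>a\<in>f. a \<notin> reachT \<omega> T" using cs(6) xT setL by blast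
  have "distinct L" unfolding L_def using cs(1) by simp
  moreover have "set L \<subseteq> E" using setL cs(3) by blast
  moreover have "set L \<inter> \<omega> = {}" using setL cs(4) by blast
  moreover have "\<not> connects (\<omega> \<union> set L) T B" by (rule safe[OF safeL])
  ultimately show ?thesis using len succL by blast
qed


lemma case3:
  assumes neutral: "cube d c0 \<rho>' \<inter> reachT \<omega> T = {}" and r1: "1 \<le> \<rho>'" and r2: "\<rho>' \<le> \<rho>"
    and m: "int m \<le> \<rho>' - 1"
  shows "\<exists>L. length L = m \<and> distinct L \<and> set L \<subseteq> E \<and> set L \<inter> \<omega> = {} \<and> successively (near d) L \<and>
     \<not> connects (\<omega> \<union> set L) T B"
proof -
  let ?Q = "cube d c0 \<rho>"
  let ?Q' = "cube d c0 \<rho>'"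
  have Q'Q: "?Q' \<subseteq> ?Q" by (rule cube_mono[OF r2])
  have xQ': "x \<in> ?Q'" using cube_mono[OF r1, of d c0] xc by (rule subsetD)
  have yQ': "y \<in> ?Q'" using cube_mono[OF r1, of d c0] yc by (rule subsetD)
  define A where "A = {v \<in> ?Q'. (x, v) \<in> (adj_rel (E - C) \<inter> ?Q' \<times> ?Q')\<^sup>*}"
  define B0 where "B0 = {v \<in> ?Q' - A. (y, v) \<in> (LA d \<inter> (?Q' - A) \<times> (?Q' - A))\<^sup>*}"
  have AQ: "A \<subseteq> ?Q'" unfolding A_def by blast
  have BQ': "B0 \<subseteq> ?Q'" unfolding B0_def by blast
  have disj: "A \<inter> B0 = {}" unfolding B0_def by blast
  have AST: "A \<subseteq> reachT (E - C) T"
  proof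
    fix v assume "v \<in> A"
    hence "(x,v) \<in> (adj_rel (E - C) \<inter> ?Q' \<times> ?Q')\<^sup>*" unfolding A_def by blast
    hence "(x,v) \<in> (adj_rel (E - C))\<^sup>*" by (rule subsetD[OF rtrancl_mono[OF Int_lower1]])
    thus "v \<in> reachT (E - C) T" by (rule reachT_closed[OF xS])
  qed
  have xA: "x \<in> A" unfolding A_def using xQ' by blast
  have ynA: "y \<notin> A" using yS AST STSB by blast
  have yB0: "y \<in> B0" unfolding B0_def using yQ' ynA by blast
  have closedB: "v \<in> A \<union> B0" if "b \<in> B0" "v \<in> ?Q'" "lattice_adj d b v" for b v
  proof (cases "v \<in> A")
    case False
    have "(y,b) \<in> (LA d \<inter> (?Q' - A) \<times> (?Q' - A))\<^sup>*" using that(1) unfolding B0_def by blast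
    moreover have "(b,v) \<in> LA d \<inter> (?Q' - A) \<times> (?Q' - A)"
    proof -
      have "b \<in> ?Q' - A" using that(1) unfolding B0_def by blast
      moreover have "(b,v) \<in> LA d" using that(3) unfolding LA_def by blast
      ultimately show ?thesis using that(2) False by blast
    qed
    ultimately have "(y,v) \<in> (LA d \<inter> (?Q' - A) \<times> (?Q' - A))\<^sup>*" by (rule rtrancl_into_rtrancl)
    hence "v \<in> B0" unfolding B0_def using that(2) False by blast
    thus ?thesis by blast
  qed simp
  have connA: "(a1,a2) \<in> (LA d \<inter> A \<times> A)\<^sup>*" if "a1 \<in> A" "a2 \<in> A" for a1 a2
    by (rule comp_conn2[OF ECLA xQ' A_def that])
  have connB: "(b1,b2) \<in> (LA d \<inter> B0 \<times> B0)\<^sup>*" if "b1 \<in> B0" "b2 \<in> B0" for b1 b2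
  proof -
    have "y \<in> ?Q' - A" using yQ' ynA by blast
    thus ?thesis by (rule comp_conn2[OF order_refl _ B0_def that])
  qed
  have eyx: "e = {x,y}" by (rule exy)
  have fs: "e \<in> bdry d A B0" unfolding bdry_def eyx using xA yB0 ladj_xy by blast
  have a0: "x \<in> e" "\<forall>i<d. \<bar>x!i - c0!i\<bar> \<le> 1" using exy xc cube_mem by auto
  obtain aA where aA: "aA \<in> A" "aA \<in> surf d c0 \<rho>'"
  proof -
    obtain t where t: "t \<in> T" "(t,x) \<in> (adj_rel (E - C))\<^sup>*" using xS unfolding reachT_def by blast
    have "(x,t) \<in> (adj_rel (E - C))\<^sup>*" using t(2) by (rule rtrancl_adj_sym)
    moreover have "t \<notin> ?Q'" using t(1) TQ Q'Q by blast
    ultimately obtain a w where aw: "(x,a) \<in> (adj_rel (E - C) \<inter> ?Q' \<times> ?Q')\<^sup>*" "a \<in> ?Q'" "w \<notin> ?Q'" "(a,w) \<in> adj_rel (E - C)"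
      using first_exit[of x t "adj_rel (E - C)" ?Q'] xQ' by blast
    have "a \<in> A" unfolding A_def using aw(1,2) by blast
    moreover have "(a,w) \<in> LA d" using aw(4) ECLA by blast
    hence "lattice_adj d a w" unfolding LA_def by blast
    hence "a \<in> surf d c0 \<rho>'" using exit_surf aw(2,3) by blast
    ultimately show ?thesis using that by blast
  qed
  obtain bB where bB: "bB \<in> B0" "bB \<in> surf d c0 \<rho>'"
  proof -
    obtain bb where bb: "bb \<in> B" "(bb,y) \<in> (adj_rel (E - C))\<^sup>*" using yS unfolding reachT_def by blast
    have "(y,bb) \<in> (adj_rel (E - C))\<^sup>*" using bb(2) by (rule rtrancl_adj_sym)
    moreover have "bb \<notin> ?Q'" using bb(1) BQ Q'Q by blast
    ultimately obtain a w where aw: "(y,a) \<in> (adj_rel (E - C) \<inter> ?Q' \<times> ?Q')\<^sup>*" "a \<in> ?Q'" "w \<notin> ?Q'" "(a,w) \<in> adj_rel (E - C)"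
      using first_exit[of y bb "adj_rel (E - C)" ?Q'] yQ' by blast
    have reach: "v \<in> - A" if "(y,v) \<in> (adj_rel (E - C))\<^sup>*" for v
    proof -
      have "v \<in> reachT (E - C) B" using reachT_closed[OF yS that] .
      thus ?thesis using AST STSB by blast
    qed
    have ya1: "(y,a) \<in> (adj_rel (E - C) \<inter> (?Q' \<inter> - A) \<times> (?Q' \<inter> - A))\<^sup>*"
      by (rule rtrancl_restrict_reach[OF aw(1) reach])
    have sub: "adj_rel (E - C) \<inter> (?Q' \<inter> - A) \<times> (?Q' \<inter> - A) \<subseteq> LA d \<inter> (?Q' - A) \<times> (?Q' - A)"
      using ECLA by blast
    have ya: "(y,a) \<in> (LA d \<inter> (?Q' - A) \<times> (?Q' - A))\<^sup>*" using subsetD[OF rtrancl_mono[OF sub] ya1] .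
    have "a \<notin> A"
    proof -
      have "(y,a) \<in> (adj_rel (E - C))\<^sup>*" using aw(1) by (rule subsetD[OF rtrancl_mono[OF Int_lower1]])
      thus ?thesis using reach[of a] by blast
    qed
    hence "a \<in> B0" unfolding B0_def using ya aw(2) by blast
    moreover have "(a,w) \<in> LA d" using aw(4) ECLA by blast
    hence "lattice_adj d a w" unfolding LA_def by blast
    hence "a \<in> surf d c0 \<rho>'" using exit_surf aw(2,3) by blast
    ultimately show ?thesis using that by blast
  qed
  have r0: "\<rho>' \<ge> 0" using r1 by simp
  obtain cs where cs: "distinct cs" "cs \<noteq> []" "hd cs = e" "set cs \<subseteq> bdry d A B0" "successively (near d) cs"
      "\<rho>' \<le> int (length cs) + 1"
  proof -
    have "\<exists>cs. distinct cs \<and> cs \<noteq> [] \<and> hd cs = e \<and> set cs \<subseteq> bdry d A B0 \<and> successively (near d) cs \<and>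
             \<rho>' \<le> int (length cs) + 1"
    proof (rule chain_generic[OF d2 lc r0 AQ BQ' disj _ _ _ fs aA bB a0])
      fix b v assume "b \<in> B0" "v \<in> ?Q'" "lattice_adj d b v" thus "v \<in> A \<union> B0" by (rule closedB)
    next
      fix a1 a2 assume "a1 \<in> A" "a2 \<in> A" thus "(a1,a2) \<in> (LA d \<inter> A \<times> A)\<^sup>*" by (rule connA)
    next
      fix b1 b2 assume "b1 \<in> B0" "b2 \<in> B0" thus "(b1,b2) \<in> (LA d \<inter> B0 \<times> B0)\<^sup>*" by (rule connB)
    qed
    thus ?thesis using that by blast
  qed
  have props: "f \<in> E \<and> f \<notin> \<omega> \<and> (\<forall>z\<in>f. z \<notin> reachT \<omega> T)" if fb: "f \<in> bdry d A B0" for f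
  proof -
    obtain a b where ab: "f = {a,b}" "a \<in> A" "b \<in> B0" "lattice_adj d a b" using fb unfolding bdry_def by blast
    have aQ': "a \<in> ?Q'" and bQ': "b \<in> ?Q'" using ab AQ BQ' by auto
    have aQ: "a \<in> ?Q" and bQ: "b \<in> ?Q" using aQ' bQ' Q'Q by auto
    have fE: "f \<in> E" using QE[OF aQ bQ ab(4)] ab(1) by simp
    have fC: "f \<in> C"
    proof (rule ccontr)
      assume "f \<notin> C"
      hence "(a,b) \<in> adj_rel (E - C)" using ab fE ladj_neq unfolding adj_rel_def by auto
      hence "(a,b) \<in> adj_rel (E - C) \<inter> ?Q' \<times> ?Q'" using aQ' bQ' by blast
      moreover have "(x,a) \<in> (adj_rel (E - C) \<inter> ?Q' \<times> ?Q')\<^sup>*" using ab(2) unfolding A_def by blast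
      ultimately have "(x,b) \<in> (adj_rel (E - C) \<inter> ?Q' \<times> ?Q')\<^sup>*" by (meson rtrancl_into_rtrancl)
      hence "b \<in> A" unfolding A_def using bQ' by blast
      thus False using ab(3) disj by blast
    qed
    have "f \<notin> \<omega>" using fC C\<omega> by blast
    moreover have "\<forall>z\<in>f. z \<notin> reachT \<omega> T" using ab(1) aQ' bQ' neutral by blast
    ultimately show ?thesis using fE by blast
  qed
  define L where "L = take m cs"
  have len: "length L = m" unfolding L_def using cs(6) m by simp
  have setL: "set L \<subseteq> set cs" unfolding L_def by (rule set_take_subset)
  have succL: "successively (near d) L"
  proof -
    have "successively (near d) (take m cs @ drop m cs)" using cs(5) by simp
    thus ?thesis unfolding L_def successively_append_iff by blast
  qed
  have safeL: "\<forall>f\<in>set L. \<forall>a\<in>f. a \<notin> reachT \<omega> T"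
  proof (intro ballI)
    fix f a assume "f \<in> set L" "a \<in> f"
    thus "a \<notin> reachT \<omega> T" using setL cs(4) props[of f] by blast
  qed
  have "distinct L" unfolding L_def using cs(1) by simp
  moreover have "set L \<subseteq> E"
  proof
    fix f assume "f \<in> set L" thus "f \<in> E" using setL cs(4) props[of f] by blast
  qed
  moreover have "set L \<inter> \<omega> = {}"
  proof (rule equals0I)
    fix f assume "f \<in> set L \<inter> \<omega>" thus False using setL cs(4) props[of f] by blast
  qed
  moreover have "\<not> connects (\<omega> \<union> set L) T B" by (rule safe[OF safeL])
  ultimately show ?thesis using len succL by blast
qed

end


lemma mgl:
  assumes d2: "d \<ge> 2"
    and Eedge: "\<And>f. f \<in> E \<Longrightarrow> lattice_edge d f"
    and \<omega>E: "\<omega> \<subseteq> E" and CE: "C \<subseteq> E" and C\<omega>: "C \<inter> \<omega> = {}"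
    and H: "\<not> connects \<omega> T B" and sepC: "\<not> connects (E - C) T B"
    and exy: "e = {x,y}" and eC: "e \<in> C"
    and xS: "x \<in> reachT (E - C) T" and yS: "y \<in> reachT (E - C) B"
    and lc: "length c0 = d"
    and QE: "\<And>a b. a \<in> cube d c0 \<rho> \<Longrightarrow> b \<in> cube d c0 \<rho> \<Longrightarrow> lattice_adj d a b \<Longrightarrow> {a,b} \<in> E"
    and TQ: "T \<inter> cube d c0 \<rho> = {}" and BQ: "B \<inter> cube d c0 \<rho> = {}"
    and piv: "\<forall>f\<in>pivotal E T B \<omega>. f \<noteq> e \<longrightarrow> (\<forall>a\<in>f. a \<notin> cube d c0 \<rho>)"
    and xc: "x \<in> cube d c0 1" and yc: "y \<in> cube d c0 1"
    and \<rho>1: "\<rho> \<ge> 1"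
    and r1: "1 \<le> \<rho>'" and r2: "2 * \<rho>' \<le> \<rho>" and m: "int m \<le> \<rho>' - 1"
  shows "\<exists>L. length L = m \<and> distinct L \<and> set L \<subseteq> E \<and> set L \<inter> \<omega> = {} \<and> successively (near d) L \<and>
     \<not> connects (\<omega> \<union> set L) T B"
proof -
  note base = d2 Eedge \<omega>E CE C\<omega> H sepC exy eC xS yS lc QE TQ BQ piv xc yc \<rho>1
  have H': "\<not> connects \<omega> B T" using H connects_sym by metis
  have sepC': "\<not> connects (E - C) B T" using sepC connects_sym by metis
  have exy': "e = {y,x}" using exy by (simp add: insert_commute)
  have piv': "\<forall>f\<in>pivotal E B T \<omega>. f \<noteq> e \<longrightarrow> (\<forall>a\<in>f. a \<notin> cube d c0 \<rho>)" using piv pivotal_sym by metis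
  note swp = d2 Eedge \<omega>E CE C\<omega> H' sepC' exy' eC yS xS lc QE BQ TQ piv' yc xc \<rho>1
  have r2': "\<rho>' \<le> \<rho>" using r1 r2 by simp
  have m2: "int m \<le> \<rho> - 2" using m r2 by simp
  have m3: "int m \<le> \<rho> - \<rho>'" using m r2 by simp
  have yQ': "y \<in> cube d c0 \<rho>'" using cube_mono[OF r1, of d c0] yc by (rule subsetD)
  let ?AT = "reachT \<omega> T" and ?AB = "reachT \<omega> B" and ?Q' = "cube d c0 \<rho>'"
  let ?G = "\<exists>L. length L = m \<and> distinct L \<and> set L \<subseteq> E \<and> set L \<inter> \<omega> = {} \<and> successively (near d) L \<and>
     \<not> connects (\<omega> \<union> set L) T B"
  show ?G
  proof (cases "x \<in> ?AT \<and> y \<in> ?AB")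
    case True
    thus ?thesis using caseP[OF base _ _ m2] by blast
  next
    case notP: False
    show ?thesis
    proof (cases "x \<notin> ?AT \<and> (\<exists>y'. y' \<in> ?AB \<and> y' \<in> ?Q')")
      case True
      then obtain y' where "x \<notin> ?AT" "y' \<in> ?AB" "y' \<in> ?Q'" by blast
      thus ?thesis using case1[OF base _ _ _ r1 r2' m3] by blast
    next
      case notC1: False
      show ?thesis
      proof (cases "y \<notin> ?AB \<and> (\<exists>x'. x' \<in> ?AT \<and> x' \<in> ?Q')")
        case True
        then obtain x' where xx: "y \<notin> ?AB" "x' \<in> ?AT" "x' \<in> ?Q'" by blast
        obtain L where L: "length L = m" "distinct L" "set L \<subseteq> E" "set L \<inter> \<omega> = {}" "successively (near d) L"
          "\<not> connects (\<omega> \<union> set L) B T"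
          using case1[OF swp xx r1 r2' m3] by blast
        have "\<not> connects (\<omega> \<union> set L) T B" using L(6) connects_sym by metis
        thus ?thesis using L(1-5) by blast
      next
        case notC2: False
        have neutral: "?Q' \<inter> ?AT = {}"
        proof (rule equals0I)
          fix x' assume x': "x' \<in> ?Q' \<inter> ?AT"
          hence yAB: "y \<in> ?AB" using notC2 by blast
          hence xAT: "x \<notin> ?AT" using notP by blast
          thus False using notC1 yAB yQ' by blast
        qed
        show ?thesis using case3[OF base neutral r1 r2' m] .
      qed
    qed
  qed
qed


lemma rtrancl_extra:
  assumes sub: "S' \<subseteq> S \<union> {u,w} \<times> {u,w}" and st: "(s,t) \<in> S'\<^sup>*"
  shows "(s,t) \<in> S\<^sup>* \<or> (((s,u) \<in> S\<^sup>* \<or> (s,w) \<in> S\<^sup>*) \<and> ((u,t) \<in> S\<^sup>* \<or> (w,t) \<in> S\<^sup>*))"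
  using st
proof (induction rule: rtrancl_induct)
  case base thus ?case by simp
next
  case (step t t')
  show ?case
  proof (cases "(t,t') \<in> S")
    case True
    from step(3) show ?thesis
    proof
      assume "(s,t) \<in> S\<^sup>*" thus ?thesis using True by (blast intro: rtrancl_into_rtrancl)
    next
      assume h: "((s,u) \<in> S\<^sup>* \<or> (s,w) \<in> S\<^sup>*) \<and> ((u,t) \<in> S\<^sup>* \<or> (w,t) \<in> S\<^sup>*)"
      have "(u,t') \<in> S\<^sup>* \<or> (w,t') \<in> S\<^sup>*" using h True by (blast intro: rtrancl_into_rtrancl)
      thus ?thesis using h by blast
    qed
  next
    case False
    hence tt: "t \<in> {u,w}" "t' \<in> {u,w}" using step(2) sub by auto
    have r: "(u,t') \<in> S\<^sup>* \<or> (w,t') \<in> S\<^sup>*" using tt(2) by auto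
    from step(3) have "(s,u) \<in> S\<^sup>* \<or> (s,w) \<in> S\<^sup>*"
    proof
      assume "(s,t) \<in> S\<^sup>*" thus ?thesis using tt(1) by auto
    qed blast
    thus ?thesis using r by blast
  qed
qed

lemma quot_card:
  assumes eqR: "equiv A R" and eqR': "equiv A R'" and sub: "R \<subseteq> R'" and u: "u \<in> A"
    and key: "\<And>s t. s \<in> A \<Longrightarrow> t \<in> A \<Longrightarrow> (s,t) \<in> R' \<Longrightarrow>
        (s,t) \<in> R \<or> (((s,u) \<in> R \<or> (s,w) \<in> R) \<and> ((t,u) \<in> R \<or> (t,w) \<in> R))"
  shows "card (A//R) \<le> card (A//R') + 1"
proof (cases "finite (A//R)")
  case False thus ?thesis by simp
next
  case True
  let ?\<phi> = "\<lambda>X. R'``X"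
  let ?c = "R``{u}"
  have img: "?\<phi> ` (A//R) = A//R'" by (rule refines_equiv_image_eq[OF sub eqR eqR'])
  have inj: "inj_on ?\<phi> (A//R - {?c})"
  proof (rule inj_onI)
    fix X Y assume X: "X \<in> A//R - {?c}" and Y: "Y \<in> A//R - {?c}" and eq: "R'``X = R'``Y"
    have "X \<in> A//R" using X by blast
    then obtain s where s: "X = R``{s}" "s \<in> A" by (rule quotientE)
    have "Y \<in> A//R" using Y by blast
    then obtain t where t: "Y = R``{t}" "t \<in> A" by (rule quotientE)
    have "R'``{s} = R'``{t}" using eq s t refines_equiv_class_eq2[OF sub eqR eqR'] by simp
    hence st: "(s,t) \<in> R'" using eq_equiv_class_iff[OF eqR' s(2) t(2)] by simp
    have sc: "(s,u) \<notin> R" using X s eq_equiv_class_iff[OF eqR s(2) u] by auto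
    have tc: "(t,u) \<notin> R" using Y t eq_equiv_class_iff[OF eqR t(2) u] by auto
    have "(s,t) \<in> R"
    proof -
      from key[OF s(2) t(2) st] sc tc have "(s,t) \<in> R \<or> ((s,w) \<in> R \<and> (t,w) \<in> R)" by blast
      thus ?thesis
      proof
        assume "(s,w) \<in> R \<and> (t,w) \<in> R"
        moreover have "sym R" "trans R" using eqR unfolding equiv_def by auto
        ultimately show ?thesis by (meson symD transD)
      qed
    qed
    thus "X = Y" using s t eq_equiv_class_iff[OF eqR s(2) t(2)] by simp
  qed
  have "finite (?\<phi> ` (A//R))" using True by (rule finite_imageI)
  hence fin': "finite (A//R')" using img by simp
  have "card (A//R - {?c}) = card (?\<phi> ` (A//R - {?c}))" using card_image[OF inj] by simp
  also have "\<dots> \<le> card (A//R')" using img fin' by (intro card_mono) auto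
  finally have "card (A//R - {?c}) \<le> card (A//R')" .
  moreover have "card (A//R) \<le> card (A//R - {?c}) + 1"
  proof (cases "?c \<in> A//R")
    case True
    have "card (A//R - {?c}) = card (A//R) - 1" using card_Diff_singleton[OF True] .
    moreover have "card (A//R) \<ge> 1" using True \<open>finite (A//R)\<close> by (metis One_nat_def Suc_leI card_gt_0_iff empty_iff)
    ultimately show ?thesis by simp
  next
    case False thus ?thesis by simp
  qed
  ultimately show ?thesis by simp
qed


lemma equiv_rt:
  assumes "sym S" shows "equiv A (S\<^sup>* \<inter> A \<times> A)"
proof (rule equivI)
  show "S\<^sup>* \<inter> A \<times> A \<subseteq> A \<times> A" by blast
  show "refl_on A (S\<^sup>* \<inter> A \<times> A)" unfolding refl_on_def by blast
  have "sym (A \<times> A)" unfolding sym_def by blast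
  thus "sym (S\<^sup>* \<inter> A \<times> A)" using sym_Int[OF sym_rtrancl[OF assms]] by blast
  have "trans (A \<times> A)" unfolding trans_def by blast
  thus "trans (S\<^sup>* \<inter> A \<times> A)" using trans_Int[OF trans_rtrancl] by blast
qed

lemma sym_Un_conv: "sym (R \<union> R\<inverse>)"
  unfolding sym_def by blast

lemma kTB_insert:
  fixes V :: "'a set"
  assumes a: "a \<in> V" and b: "b \<in> V"
  shows "kTB V T B \<omega> \<le> kTB V T B (insert {a,b} \<omega>) + 1"
proof -
  define V' :: "('a + bool) set" where "V' = Inl ` V \<union> {Inr True, Inr False}"
  define R :: "('a + bool) rel" where "R = {(Inl x, Inl y) | x y. {x, y} \<in> \<omega>} \<union> {(Inr True, Inl x) | x. x \<in> T}
           \<union> {(Inr False, Inl x) | x. x \<in> B}"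
  define R2 :: "('a + bool) rel" where "R2 = {(Inl x, Inl y) | x y. {x, y} \<in> insert {a,b} \<omega>} \<union> {(Inr True, Inl x) | x. x \<in> T}
           \<union> {(Inr False, Inl x) | x. x \<in> B}"
  define S where "S = R \<union> R\<inverse>"
  define S2 where "S2 = R2 \<union> R2\<inverse>"
  have k1: "kTB V T B \<omega> = card (V' // (S\<^sup>* \<inter> V' \<times> V'))"
    unfolding kTB_def V'_def R_def S_def Let_def by simp
  have k2: "kTB V T B (insert {a,b} \<omega>) = card (V' // (S2\<^sup>* \<inter> V' \<times> V'))"
    unfolding kTB_def V'_def R2_def S2_def Let_def by simp
  let ?u = "Inl a :: 'a + bool" and ?w = "Inl b :: 'a + bool"
  have RR2: "R \<subseteq> R2" unfolding R_def R2_def by blast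
  have R2R: "R2 \<subseteq> R \<union> {?u,?w} \<times> {?u,?w}"
  proof
    fix p assume "p \<in> R2"
    show "p \<in> R \<union> {?u,?w} \<times> {?u,?w}"
    proof (cases "p \<in> R")
      case False
      then obtain x y where "p = (Inl x, Inl y)" "{x,y} = {a,b}" using \<open>p \<in> R2\<close> unfolding R_def R2_def by blast
      thus ?thesis by (auto simp: doubleton_eq_iff)
    qed simp
  qed
  have SS2: "S \<subseteq> S2" unfolding S_def S2_def using RR2 by blast
  have S2S: "S2 \<subseteq> S \<union> {?u,?w} \<times> {?u,?w}" unfolding S_def S2_def using R2R by blast
  have eq1: "equiv V' (S\<^sup>* \<inter> V' \<times> V')" unfolding S_def by (rule equiv_rt[OF sym_Un_conv])
  have eq2: "equiv V' (S2\<^sup>* \<inter> V' \<times> V')" unfolding S2_def by (rule equiv_rt[OF sym_Un_conv])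
  have symS: "sym (S\<^sup>*)" unfolding S_def by (rule sym_rtrancl[OF sym_Un_conv])
  have sub: "S\<^sup>* \<inter> V' \<times> V' \<subseteq> S2\<^sup>* \<inter> V' \<times> V'" using rtrancl_mono[OF SS2] by blast
  have uV: "?u \<in> V'" and wV: "?w \<in> V'" unfolding V'_def using a b by auto
  have key: "(s,t) \<in> S\<^sup>* \<inter> V' \<times> V' \<or> (((s,?u) \<in> S\<^sup>* \<inter> V' \<times> V' \<or> (s,?w) \<in> S\<^sup>* \<inter> V' \<times> V') \<and>
       ((t,?u) \<in> S\<^sup>* \<inter> V' \<times> V' \<or> (t,?w) \<in> S\<^sup>* \<inter> V' \<times> V'))"
    if st: "s \<in> V'" "t \<in> V'" "(s,t) \<in> S2\<^sup>* \<inter> V' \<times> V'" for s t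
  proof -
    have "(s,t) \<in> S2\<^sup>*" using st(3) by blast
    from rtrancl_extra[OF S2S this]
    have h: "(s,t) \<in> S\<^sup>* \<or> (((s,?u) \<in> S\<^sup>* \<or> (s,?w) \<in> S\<^sup>*) \<and> ((?u,t) \<in> S\<^sup>* \<or> (?w,t) \<in> S\<^sup>*))" .
    have "(?u,t) \<in> S\<^sup>* \<Longrightarrow> (t,?u) \<in> S\<^sup>*" using symS by (rule symD)
    moreover have "(?w,t) \<in> S\<^sup>* \<Longrightarrow> (t,?w) \<in> S\<^sup>*" using symS by (rule symD)
    ultimately show ?thesis using h st(1,2) uV wV by blast
  qed
  have "card (V' // (S\<^sup>* \<inter> V' \<times> V')) \<le> card (V' // (S2\<^sup>* \<inter> V' \<times> V')) + 1"
    by (rule quot_card[OF eq1 eq2 sub uV key])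
  thus ?thesis using k1 k2 by simp
qed

lemma kTB_union:
  assumes "finite F" "\<forall>f\<in>F. \<exists>a b. f = {a,b} \<and> a \<in> V \<and> b \<in> V"
  shows "kTB V T B \<omega> \<le> kTB V T B (\<omega> \<union> F) + card F"
  using assms
proof (induction F rule: finite_induct)
  case empty thus ?case by simp
next
  case (insert f F)
  obtain a b where ab: "f = {a,b}" "a \<in> V" "b \<in> V" using insert(4) by blast
  have "kTB V T B \<omega> \<le> kTB V T B (\<omega> \<union> F) + card F" using insert by blast
  also have "kTB V T B (\<omega> \<union> F) \<le> kTB V T B (insert f (\<omega> \<union> F)) + 1"
    unfolding ab(1) by (rule kTB_insert[OF ab(2,3)])
  finally show ?case using insert(1,2) by simp
qed


lemma weight_ineq:
  assumes p0: "0 < p" and p1: "p \<le> 1" and q1: "q \<ge> 1" and fE: "finite E" and wE: "\<omega> \<subseteq> E"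
    and FE: "F \<subseteq> E" and Fw: "F \<inter> \<omega> = {}" and FV: "\<forall>f\<in>F. \<exists>a b. f = {a,b} \<and> a \<in> V \<and> b \<in> V"
  shows "rc_weight V E T B p q \<omega> \<le> (q * (1 - p) / p) ^ card F * rc_weight V E T B p q (\<omega> \<union> F)"
proof -
  have fF: "finite F" using FE fE finite_subset by blast
  have fw: "finite \<omega>" using wE fE finite_subset by blast
  have cU: "card (\<omega> \<union> F) = card \<omega> + card F" using card_Un_disjoint[OF fw fF] Fw by auto
  have le: "card \<omega> + card F \<le> card E" using card_mono[OF fE, of "\<omega> \<union> F"] wE FE cU by auto
  define k where "k = card \<omega>"
  define m where "m = card F"
  define n where "n = card E"
  define K1 where "K1 = kTB V T B \<omega>"
  define K2 where "K2 = kTB V T B (\<omega> \<union> F)"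
  have K: "K1 \<le> K2 + m" unfolding K1_def K2_def m_def by (rule kTB_union[OF fF FV])
  have nk: "n - k = (n - k - m) + m" using le unfolding n_def k_def m_def by simp
  have w1: "rc_weight V E T B p q \<omega> = p ^ k * (1 - p) ^ (n - k) * q ^ K1"
    unfolding rc_weight_def k_def n_def K1_def by simp
  have w2: "rc_weight V E T B p q (\<omega> \<union> F) = p ^ (k + m) * (1 - p) ^ (n - k - m) * q ^ K2"
    unfolding rc_weight_def k_def n_def K2_def m_def cU by (simp add: diff_diff_add)
  have q0: "q > 0" using q1 by simp
  have pp: "1 - p \<ge> 0" using p1 by simp
  have e1: "(q * (1 - p) / p) ^ m = q ^ m * (1 - p) ^ m / p ^ m" by (simp add: power_divide power_mult_distrib)
  have pm: "p ^ m \<noteq> 0" using p0 by simp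
  have "(q * (1 - p) / p) ^ m * (p ^ (k + m) * (1 - p) ^ (n - k - m) * q ^ K2)
        = (q ^ m * (1 - p) ^ m / p ^ m) * (p ^ k * p ^ m * (1 - p) ^ (n - k - m) * q ^ K2)"
    unfolding e1 by (simp add: power_add)
  also have "\<dots> = p ^ k * ((1 - p) ^ (n - k - m) * (1 - p) ^ m) * (q ^ K2 * q ^ m)"
    using pm by (simp add: field_simps)
  also have "\<dots> = p ^ k * ((1 - p) ^ (n - k - m) * (1 - p) ^ m) * q ^ (K2 + m)"
    by (simp add: power_add)
  also have "(1 - p) ^ (n - k - m) * (1 - p) ^ m = (1 - p) ^ (n - k)"
    by (subst nk) (simp add: power_add)
  finally have eq: "(q * (1 - p) / p) ^ m * (p ^ (k + m) * (1 - p) ^ (n - k - m) * q ^ K2)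
        = p ^ k * (1 - p) ^ (n - k) * q ^ (K2 + m)" by simp
  have "q ^ K1 \<le> q ^ (K2 + m)" by (rule power_increasing[OF K q1])
  hence "p ^ k * (1 - p) ^ (n - k) * q ^ K1 \<le> p ^ k * (1 - p) ^ (n - k) * q ^ (K2 + m)"
    using p0 pp by (intro mult_left_mono) auto
  thus ?thesis using w1 w2 eq unfolding m_def by simp
qed

lemma rc_weight_nonneg:
  assumes "0 \<le> p" "p \<le> 1" "q \<ge> 0" shows "rc_weight V E T B p q \<omega> \<ge> 0"
  unfolding rc_weight_def using assms by simp

lemma sum_bound:
  fixes w :: "'e set \<Rightarrow> real" and Fs :: "'l \<Rightarrow> 'e set"
  assumes fE: "finite E" and fL: "finite Ls" and w0: "\<And>\<omega>. w \<omega> \<ge> 0" and K0: "K \<ge> 0"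
    and cover: "\<And>\<omega>. \<omega> \<subseteq> E \<Longrightarrow> A \<omega> \<Longrightarrow> H \<omega> \<Longrightarrow> \<exists>L\<in>Ls. Fs L \<inter> \<omega> = {} \<and> H (\<omega> \<union> Fs L)"
    and FsE: "\<And>L. L \<in> Ls \<Longrightarrow> Fs L \<subseteq> E"
    and winj: "\<And>L \<omega>. L \<in> Ls \<Longrightarrow> \<omega> \<subseteq> E \<Longrightarrow> Fs L \<inter> \<omega> = {} \<Longrightarrow> w \<omega> \<le> K * w (\<omega> \<union> Fs L)"
  shows "(\<Sum>\<omega>\<in>{\<omega>. \<omega> \<subseteq> E \<and> A \<omega> \<and> H \<omega>}. w \<omega>) \<le> real (card Ls) * K * (\<Sum>\<omega>\<in>{\<omega>. \<omega> \<subseteq> E \<and> H \<omega>}. w \<omega>)"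
proof -
  let ?P = "\<lambda>L \<omega>. Fs L \<inter> \<omega> = {} \<and> H (\<omega> \<union> Fs L)"
  let ?SAH = "{\<omega>. \<omega> \<subseteq> E \<and> A \<omega> \<and> H \<omega>}"
  let ?SH = "{\<omega>. \<omega> \<subseteq> E \<and> H \<omega>}"
  have fP: "finite (Pow E)" using fE by simp
  have fSAH: "finite ?SAH" using fP by (rule finite_subset[rotated]) auto
  have fSH: "finite ?SH" using fP by (rule finite_subset[rotated]) auto
  have step1: "w \<omega> \<le> (\<Sum>L\<in>Ls. if ?P L \<omega> then w \<omega> else 0)" if "\<omega> \<in> ?SAH" for \<omega>
  proof -
    have "\<omega> \<subseteq> E" "A \<omega>" "H \<omega>" using that by auto
    then obtain L where L: "L \<in> Ls" "?P L \<omega>" using cover by blast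
    have "w \<omega> = (if ?P L \<omega> then w \<omega> else 0)" using L by simp
    also have "\<dots> \<le> (\<Sum>L\<in>Ls. if ?P L \<omega> then w \<omega> else 0)"
    proof (rule member_le_sum[OF L(1)])
      fix x show "0 \<le> (if ?P x \<omega> then w \<omega> else 0)" using w0[of \<omega>] by simp
    qed (rule fL)
    finally show ?thesis .
  qed
  have "(\<Sum>\<omega>\<in>?SAH. w \<omega>) \<le> (\<Sum>\<omega>\<in>?SAH. \<Sum>L\<in>Ls. if ?P L \<omega> then w \<omega> else 0)"
    by (rule sum_mono) (rule step1)
  also have "\<dots> \<le> (\<Sum>\<omega>\<in>Pow E. \<Sum>L\<in>Ls. if ?P L \<omega> then w \<omega> else 0)"
  proof (rule sum_mono2[OF fP])
    show "?SAH \<subseteq> Pow E" by blast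
    fix b show "0 \<le> (\<Sum>L\<in>Ls. if ?P L b then w b else 0)"
      by (rule sum_nonneg) (simp add: w0)
  qed
  also have "\<dots> = (\<Sum>L\<in>Ls. \<Sum>\<omega>\<in>Pow E. if ?P L \<omega> then w \<omega> else 0)" by (rule sum.swap)
  also have "\<dots> \<le> (\<Sum>L\<in>Ls. K * (\<Sum>\<omega>\<in>?SH. w \<omega>))"
  proof (rule sum_mono)
    fix L assume L: "L \<in> Ls"
    let ?G = "{\<omega> \<in> Pow E. ?P L \<omega>}"
    have fG: "finite ?G" using fP by simp
    have "(\<Sum>\<omega>\<in>Pow E. if ?P L \<omega> then w \<omega> else 0) = (\<Sum>\<omega>\<in>?G. w \<omega>)"
      by (rule sum.inter_filter[symmetric, OF fP])
    also have "\<dots> \<le> (\<Sum>\<omega>\<in>?G. K * w (\<omega> \<union> Fs L))"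
    proof (rule sum_mono)
      fix \<omega> assume "\<omega> \<in> ?G"
      hence "\<omega> \<subseteq> E" "Fs L \<inter> \<omega> = {}" by auto
      thus "w \<omega> \<le> K * w (\<omega> \<union> Fs L)" by (rule winj[OF L])
    qed
    also have "\<dots> = K * (\<Sum>\<omega>\<in>?G. w (\<omega> \<union> Fs L))" by (simp add: sum_distrib_left)
    also have "(\<Sum>\<omega>\<in>?G. w (\<omega> \<union> Fs L)) = (\<Sum>\<omega>'\<in>(\<lambda>\<omega>. \<omega> \<union> Fs L) ` ?G. w \<omega>')"
    proof -
      have "inj_on (\<lambda>\<omega>. \<omega> \<union> Fs L) ?G"
      proof (rule inj_onI)
        fix a b assume "a \<in> ?G" "b \<in> ?G" "a \<union> Fs L = b \<union> Fs L"
        thus "a = b" by blast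
      qed
      thus ?thesis by (simp add: sum.reindex)
    qed
    also have "\<dots> \<le> (\<Sum>\<omega>'\<in>?SH. w \<omega>')"
    proof (rule sum_mono2[OF fSH])
      show "(\<lambda>\<omega>. \<omega> \<union> Fs L) ` ?G \<subseteq> ?SH" using FsE[OF L] by auto
    qed (simp add: w0)
    hence "K * (\<Sum>\<omega>'\<in>(\<lambda>\<omega>. \<omega> \<union> Fs L) ` ?G. w \<omega>') \<le> K * (\<Sum>\<omega>'\<in>?SH. w \<omega>')"
      using K0 by (simp add: mult_left_mono)
    finally show "(\<Sum>\<omega>\<in>Pow E. if ?P L \<omega> then w \<omega> else 0) \<le> K * (\<Sum>\<omega>\<in>?SH. w \<omega>)" .
  qed
  also have "\<dots> = real (card Ls) * K * (\<Sum>\<omega>\<in>?SH. w \<omega>)" by simp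
  finally show ?thesis .
qed

lemma cond_bound:
  assumes "SAH \<le> M * SH" "SAH \<ge> 0" "SH \<ge> 0" "M \<ge> 0" "Z \<ge> 0"
  shows "(SAH / Z) / (SH / Z) \<le> (M::real)"
proof (cases "Z = 0 \<or> SH = 0")
  case True thus ?thesis using assms by auto
next
  case False
  hence "(SAH / Z) / (SH / Z) = SAH / SH" by simp
  also have "\<dots> \<le> M" using assms False by (simp add: divide_le_eq)
  finally show ?thesis .
qed


definition CS :: "nat \<Rightarrow> int list set set \<Rightarrow> nat \<Rightarrow> int list set list set" where
  "CS d E k = {L. length L = Suc k \<and> set L \<subseteq> E \<and> successively (near d) L}"

lemma CS_finite: "finite E \<Longrightarrow> finite (CS d E k)"
proof -
  assume "finite E"
  hence "finite {L. set L \<subseteq> E \<and> length L = Suc k}" by (rule finite_lists_length_eq)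
  thus ?thesis unfolding CS_def by (rule finite_subset[rotated]) blast
qed

lemma CS_card:
  assumes fE: "finite E" and D: "\<And>f. f \<in> E \<Longrightarrow> card {g \<in> E. near d g f} \<le> D"
  shows "card (CS d E k) \<le> card E * D ^ k"
proof (induction k)
  case 0
  have "CS d E 0 = (\<lambda>f. [f]) ` E"
  proof
    show "CS d E 0 \<subseteq> (\<lambda>f. [f]) ` E"
    proof
      fix L assume "L \<in> CS d E 0"
      hence "length L = 1" "set L \<subseteq> E" unfolding CS_def by auto
      then obtain f where "L = [f]" by (metis One_nat_def length_0_conv length_Suc_conv)
      thus "L \<in> (\<lambda>f. [f]) ` E" using \<open>set L \<subseteq> E\<close> by auto
    qed
    show "(\<lambda>f. [f]) ` E \<subseteq> CS d E 0" unfolding CS_def by auto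
  qed
  hence "card (CS d E 0) \<le> card E" using card_image_le[OF fE] by simp
  thus ?case by simp
next
  case (Suc k)
  let ?U = "\<Union>L\<in>CS d E k. (\<lambda>g. g # L) ` {g \<in> E. near d g (hd L)}"
  have sub: "CS d E (Suc k) \<subseteq> ?U"
  proof
    fix L assume L: "L \<in> CS d E (Suc k)"
    then obtain g L' where gL: "L = g # L'" unfolding CS_def by (cases L) auto
    have lL': "length L' = Suc k" using L gL unfolding CS_def by simp
    then obtain h L'' where L'': "L' = h # L''" by (cases L') auto
    have s: "successively (near d) (g # h # L'')" using L gL L'' unfolding CS_def by simp
    have "L' \<in> CS d E k" using L gL lL' s L'' unfolding CS_def by auto
    moreover have "g \<in> E" using L gL unfolding CS_def by auto
    moreover have "near d g (hd L')" using s L'' by simp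
    ultimately show "L \<in> ?U" using gL by blast
  qed
  have fU: "\<forall>L\<in>CS d E k. finite ((\<lambda>g. g # L) ` {g \<in> E. near d g (hd L)})" using fE by simp
  have "card (CS d E (Suc k)) \<le> card ?U"
    by (rule card_mono[OF _ sub]) (use CS_finite[OF fE] fU in blast)
  also have "\<dots> \<le> (\<Sum>L\<in>CS d E k. card ((\<lambda>g. g # L) ` {g \<in> E. near d g (hd L)}))"
    by (rule card_UN_le[OF CS_finite[OF fE]])
  also have "\<dots> \<le> (\<Sum>L\<in>CS d E k. D)"
  proof (rule sum_mono)
    fix L assume L: "L \<in> CS d E k"
    have "hd L \<in> E" using L unfolding CS_def by (cases L) auto
    have "card ((\<lambda>g. g # L) ` {g \<in> E. near d g (hd L)}) \<le> card {g \<in> E. near d g (hd L)}"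
      using fE by (intro card_image_le) simp
    also have "\<dots> \<le> D" using D[OF \<open>hd L \<in> E\<close>] .
    finally show "card ((\<lambda>g. g # L) ` {g \<in> E. near d g (hd L)}) \<le> D" .
  qed
  also have "\<dots> = card (CS d E k) * D" by simp
  also have "\<dots> \<le> card E * D ^ k * D" using Suc.IH by (rule mult_right_mono) simp
  finally show ?case by (simp add: ac_simps)
qed

definition nbhd :: "nat \<Rightarrow> int list \<Rightarrow> int list set" where
  "nbhd d a = {v. length v = d \<and> (\<forall>i<d. \<bar>v!i - a!i\<bar> \<le> 1)}"

lemma nbhd_card: assumes "length a = d" shows "card (nbhd d a) \<le> 3 ^ d"
proof -
  let ?Z = "{zs. set zs \<subseteq> {-1,0,1::int} \<and> length zs = d}"
  have c3: "card {-1,0,1::int} = 3" by simp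
  have "card ?Z = card {-1,0,1::int} ^ d" by (rule card_lists_length_eq) simp
  hence cZ: "card ?Z = 3 ^ d" by (simp only: c3)
  have fZ: "finite ?Z" by (rule finite_lists_length_eq) simp
  have "nbhd d a \<subseteq> (\<lambda>zs. map (\<lambda>i. a!i + zs!i) [0..<d]) ` ?Z"
  proof
    fix v assume v: "v \<in> nbhd d a"
    define zs where "zs = map (\<lambda>i. v!i - a!i) [0..<d]"
    have "set zs \<subseteq> {-1,0,1}"
    proof
      fix z assume "z \<in> set zs"
      then obtain i where i: "i < d" "z = v!i - a!i" unfolding zs_def by auto
      have "\<bar>v!i - a!i\<bar> \<le> 1" using v i(1) unfolding nbhd_def by blast
      thus "z \<in> {-1,0,1}" using i(2) by auto
    qed
    moreover have "length zs = d" unfolding zs_def by simp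
    moreover have "v = map (\<lambda>i. a!i + zs!i) [0..<d]"
      using v unfolding nbhd_def zs_def by (intro nth_equalityI) auto
    ultimately show "v \<in> (\<lambda>zs. map (\<lambda>i. a!i + zs!i) [0..<d]) ` ?Z" by blast
  qed
  hence "card (nbhd d a) \<le> card ((\<lambda>zs. map (\<lambda>i. a!i + zs!i) [0..<d]) ` ?Z)"
    using fZ by (intro card_mono) auto
  also have "\<dots> \<le> card ?Z" using fZ by (rule card_image_le)
  finally show ?thesis using cZ by simp
qed

lemma nbhd_finite: "finite (nbhd d a)"
proof -
  have "finite {zs. set zs \<subseteq> {-1,0,1::int} \<and> length zs = d}" by (rule finite_lists_length_eq) simp
  hence "finite ((\<lambda>zs. map (\<lambda>i. a!i + zs!i) [0..<d]) ` {zs. set zs \<subseteq> {-1,0,1::int} \<and> length zs = d})" by simp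
  moreover have "nbhd d a \<subseteq> (\<lambda>zs. map (\<lambda>i. a!i + zs!i) [0..<d]) ` {zs. set zs \<subseteq> {-1,0,1::int} \<and> length zs = d}"
  proof
    fix v assume v: "v \<in> nbhd d a"
    define zs where "zs = map (\<lambda>i. v!i - a!i) [0..<d]"
    have "set zs \<subseteq> {-1,0,1}"
    proof
      fix z assume "z \<in> set zs"
      then obtain i where i: "i < d" "z = v!i - a!i" unfolding zs_def by auto
      have "\<bar>v!i - a!i\<bar> \<le> 1" using v i(1) unfolding nbhd_def by blast
      thus "z \<in> {-1,0,1}" using i(2) by auto
    qed
    moreover have "length zs = d" unfolding zs_def by simp
    moreover have "v = map (\<lambda>i. a!i + zs!i) [0..<d]"
      using v unfolding nbhd_def zs_def by (intro nth_equalityI) auto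
    ultimately show "v \<in> (\<lambda>zs. map (\<lambda>i. a!i + zs!i) [0..<d]) ` {zs. set zs \<subseteq> {-1,0,1::int} \<and> length zs = d}" by blast
  qed
  ultimately show ?thesis by (rule finite_subset[rotated])
qed

lemma near_card:
  assumes "lattice_edge d f"
  shows "card {g \<in> E. lattice_edge d g \<and> near d g f} \<le> 9 ^ d"
proof -
  obtain a0 b0 where ab: "f = {a0,b0}" "lattice_adj d a0 b0" using assms unfolding lattice_edge_def by blast
  have la: "length a0 = d" using ab(2) unfolding ladj_iff by simp
  let ?W = "nbhd d a0"
  have "{g \<in> E. lattice_edge d g \<and> near d g f} \<subseteq> (\<lambda>(u,v). {u,v}) ` (?W \<times> ?W)"
  proof
    fix g assume g: "g \<in> {g \<in> E. lattice_edge d g \<and> near d g f}"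
    then obtain u v where uv: "g = {u,v}" "lattice_adj d u v" unfolding lattice_edge_def by blast
    have nr: "near d g f" using g by blast
    have "u \<in> ?W" "v \<in> ?W" using nr uv ab(1) uv(2) unfolding near_def nbhd_def ladj_iff by auto
    thus "g \<in> (\<lambda>(u,v). {u,v}) ` (?W \<times> ?W)" using uv(1) by force
  qed
  hence "card {g \<in> E. lattice_edge d g \<and> near d g f} \<le> card ((\<lambda>(u,v). {u,v}) ` (?W \<times> ?W))"
    using nbhd_finite by (intro card_mono) auto
  also have "\<dots> \<le> card (?W \<times> ?W)" using nbhd_finite by (intro card_image_le) auto
  also have "\<dots> = card ?W * card ?W" by (simp add: card_cartesian_product)
  also have "\<dots> \<le> 3 ^ d * 3 ^ d" using nbhd_card[OF la] by (intro mult_mono) auto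
  also have "\<dots> = 9 ^ d" by (simp add: power_mult_distrib[symmetric])
  finally show ?thesis .
qed


lemma l1_cube_bound:
  assumes "v \<in> cube d x \<rho>"
  shows "l1 d x v \<le> int d * \<rho>"
proof -
  have "l1 d x v = (\<Sum>i<d. \<bar>x!i - v!i\<bar>)" unfolding l1_def ..
  also have "\<dots> \<le> (\<Sum>i<d. \<rho>)"
  proof (rule sum_mono)
    fix i assume "i \<in> {..<d}"
    hence "\<bar>v!i - x!i\<bar> \<le> \<rho>" using assms unfolding cube_mem by blast
    thus "\<bar>x!i - v!i\<bar> \<le> \<rho>" by (simp add: abs_minus_commute)
  qed
  also have "\<dots> = int d * \<rho>" by simp
  finally show ?thesis .
qed

lemma box_E_edge: "f \<in> box_E d u r \<Longrightarrow> lattice_edge d f"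
  unfolding box_E_def by blast

lemma box_E_sub: "f \<in> box_E d u r \<Longrightarrow> f \<subseteq> box_V d u r"
  unfolding box_E_def by blast

lemma box_cover:
  assumes d2: "d \<ge> 2"
    and Vd: "V = box_V d u r" and Ed: "E = box_E d u r" and TB: "T \<subseteq> box_bd d u r" "B \<subseteq> box_bd d u r"
    and \<omega>E: "\<omega> \<subseteq> E" and H: "\<not> connects \<omega> T B" and Cc: "C \<in> cuts_of E T B \<omega>" and eC: "e \<in> C"
    and dist: "edge_set_dist d e ((pivotal E T B \<omega> \<union> box_Ec d u r) - {e}) \<ge> R"
    and \<rho>R: "real d * real_of_int \<rho> < R" and r1: "1 \<le> \<rho>'" and r2: "2 * \<rho>' \<le> \<rho>" and m: "int m \<le> \<rho>' - 1"
  shows "\<exists>L. length L = m \<and> distinct L \<and> set L \<subseteq> E \<and> set L \<inter> \<omega> = {} \<and> successively (near d) L \<and>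
     \<not> connects (\<omega> \<union> set L) T B"
proof -
  have \<rho>1: "\<rho> \<ge> 1" using r1 r2 by simp
  have cut: "is_cut E C T B" and C\<omega>: "C \<inter> \<omega> = {}" using Cc unfolding cuts_of_def by auto
  have CE: "C \<subseteq> E" and sepC: "\<not> connects (E - C) T B" using cut unfolding is_cut_def separates_def by auto
  obtain x y where exy: "e = {x,y}" and xS: "x \<in> reachT (E - C) T" and yS: "y \<in> reachT (E - C) B"
    using cut_endpoints[OF cut eC] by blast
  have eE: "e \<in> E" using eC CE by blast
  have Eedge: "\<And>f. f \<in> E \<Longrightarrow> lattice_edge d f" using Ed box_E_edge by blast
  have xy: "x \<noteq> y" using xS yS reachT_disj[OF sepC] by blast
  have ladj: "lattice_adj d x y"
  proof -
    obtain a b where ab: "e = {a,b}" "lattice_adj d a b" using Eedge[OF eE] unfolding lattice_edge_def by blast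
    have "(x = a \<and> y = b) \<or> (x = b \<and> y = a)" using ab(1) exy xy by (auto simp: doubleton_eq_iff)
    thus ?thesis using ab(2) ladj_sym by auto
  qed
  have lx: "length x = d" using ladj unfolding ladj_iff by simp
  have xV: "x \<in> V" using box_E_sub[of e d u r] eE Ed Vd exy by blast
  let ?Q = "cube d x \<rho>"
  let ?S = "{real_of_int (l1 d a b) | a b f. f \<in> (pivotal E T B \<omega> \<union> box_Ec d u r) - {e} \<and> a \<in> e \<and> b \<in> f}"
  have distb: "R \<le> real_of_int (l1 d x b)" if "f \<in> pivotal E T B \<omega> \<union> box_Ec d u r" "f \<noteq> e" "b \<in> f" for f b
  proof -
    have mem: "real_of_int (l1 d x b) \<in> ?S" using that exy by blast
    have bdd: "bdd_below ?S"
    proof (rule bdd_belowI)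
      fix z assume "z \<in> ?S" thus "0 \<le> z" using l1_nonneg by auto
    qed
    have "edge_set_dist d e ((pivotal E T B \<omega> \<union> box_Ec d u r) - {e}) \<le> real_of_int (l1 d x b)"
      unfolding edge_set_dist_def by (rule cInf_lower[OF mem bdd])
    thus ?thesis using dist by simp
  qed
  have inQ: "real_of_int (l1 d x v) < R" if "v \<in> ?Q" for v
  proof -
    have "l1 d x v \<le> int d * \<rho>" by (rule l1_cube_bound[OF that])
    hence "real_of_int (l1 d x v) \<le> real d * real_of_int \<rho>" by (metis of_int_le_iff of_int_mult of_int_of_nat_eq)
    thus ?thesis using \<rho>R by simp
  qed
  have xQ: "x \<in> ?Q" unfolding cube_mem using lx \<rho>1 by simp
  have QV: "?Q \<subseteq> V"
  proof
    fix v assume vQ: "v \<in> ?Q"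
    show "v \<in> V"
    proof (rule ccontr)
      assume vV: "v \<notin> V"
      have "(x,v) \<in> (LA d \<inter> ?Q \<times> ?Q)\<^sup>*"
        using pset_path[OF xQ[unfolded cube_pset] vQ[unfolded cube_pset]] unfolding cube_pset .
      then obtain a w where aw: "a \<in> V" "w \<notin> V" "(a,w) \<in> LA d \<inter> ?Q \<times> ?Q"
        using first_exit[of x v "LA d \<inter> ?Q \<times> ?Q" V] xV vV by blast
      have aQ: "a \<in> ?Q" and adj: "lattice_adj d a w" using aw(3) unfolding LA_def by auto
      have le: "lattice_edge d {a,w}" unfolding lattice_edge_def using adj by blast
      have "{a,w} \<notin> E" using aw(2) Ed Vd box_E_sub by blast
      hence Ec: "{a,w} \<in> box_Ec d u r" unfolding box_Ec_def using le Ed by blast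
      have "{a,w} \<noteq> e" using \<open>{a,w} \<notin> E\<close> eE by blast
      hence "R \<le> real_of_int (l1 d x a)" using distb[of "{a,w}" a] Ec by blast
      thus False using inQ[OF aQ] by simp
    qed
  qed
  have QE: "{a,b} \<in> E" if "a \<in> ?Q" "b \<in> ?Q" "lattice_adj d a b" for a b
  proof -
    have "lattice_edge d {a,b}" unfolding lattice_edge_def using that(3) by blast
    moreover have "{a,b} \<subseteq> V" using that(1,2) QV by blast
    ultimately show ?thesis unfolding Ed box_E_def using Vd by blast
  qed
  have bdfar: "t \<notin> ?Q" if tb: "t \<in> box_bd d u r" for t
  proof
    assume tQ: "t \<in> ?Q"
    obtain w where w: "w \<notin> box_V d u r" "lattice_adj d t w" using tb unfolding box_bd_def by blast
    have le: "lattice_edge d {t,w}" unfolding lattice_edge_def using w(2) by blast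
    have "{t,w} \<notin> E" using w(1) Ed box_E_sub by blast
    hence Ec: "{t,w} \<in> box_Ec d u r" unfolding box_Ec_def using le Ed by blast
    have "{t,w} \<noteq> e" using \<open>{t,w} \<notin> E\<close> eE by blast
    hence "R \<le> real_of_int (l1 d x t)" using distb[of "{t,w}" t] Ec by blast
    thus False using inQ[OF tQ] by simp
  qed
  have TQ: "T \<inter> ?Q = {}" using TB(1) bdfar by blast
  have BQ: "B \<inter> ?Q = {}" using TB(2) bdfar by blast
  have piv: "\<forall>f\<in>pivotal E T B \<omega>. f \<noteq> e \<longrightarrow> (\<forall>a\<in>f. a \<notin> ?Q)"
  proof (intro ballI impI)
    fix f a assume "f \<in> pivotal E T B \<omega>" "f \<noteq> e" "a \<in> f"
    hence "R \<le> real_of_int (l1 d x a)" using distb[of f a] by blast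
    thus "a \<notin> ?Q" using inQ by force
  qed
  have xc: "x \<in> cube d x 1" unfolding cube_mem using lx by simp
  have yc: "y \<in> cube d x 1"
  proof -
    have "length y = d" using ladj unfolding ladj_iff by simp
    moreover have "\<forall>i<d. \<bar>y!i - x!i\<bar> \<le> 1" using ladj_coord[OF ladj] by (simp add: abs_minus_commute)
    ultimately show ?thesis unfolding cube_mem by simp
  qed
  show ?thesis
    by (rule mgl[OF d2 Eedge \<omega>E CE C\<omega> H sepC exy eC xS yS lx QE TQ BQ piv xc yc \<rho>1 r1 r2 m])
qed


lemma final_arith:
  fixes n c D \<rho>f :: real and m :: nat
  assumes n1: "n \<ge> 1" and ln3: "ln n \<ge> 3" and c1: "c \<ge> 1" and Dr: "D * \<rho>f \<le> 1/5" and r0: "\<rho>f \<ge> 0"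
    and D1: "D \<ge> 1" and m: "real m \<ge> 3 * c * ln n - 2"
  shows "n * D^m * \<rho>f^m \<le> 1 / n powr c"
proof -
  have n0: "n > 0" using n1 by simp
  have "n * D^m * \<rho>f^m = n * (D * \<rho>f)^m" by (simp add: power_mult_distrib)
  also have "\<dots> \<le> n * (1/5)^m"
    using Dr r0 D1 n0 by (intro mult_left_mono power_mono) auto
  also have "\<dots> = n / 5^m" by (simp add: power_divide)
  finally have s1: "n * D^m * \<rho>f^m \<le> n / 5^m" .
  have cl: "c * ln n \<ge> ln n" using c1 ln3 by (simp add: mult_right_mono)
  have mb: "real m \<ge> (1 + c) * ln n"
  proof -
    have e: "3 * c * ln n = 3 * (c * ln n)" "(1 + c) * ln n = ln n + c * ln n" by (simp_all add: algebra_simps)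
    show ?thesis using m cl ln3 unfolding e by linarith
  qed
  have l5: "ln (5::real) \<ge> 1"
  proof -
    have "exp 1 \<le> (5::real)" using exp_le by simp
    thus ?thesis using ln_ge_iff[of 5 1] by simp
  qed
  have "(1 + c) * ln n \<le> real m * ln 5"
  proof -
    have "real m \<le> real m * ln 5" using l5 by (simp add: mult_le_cancel_left1)
    thus ?thesis using mb by linarith
  qed
  hence "exp ((1 + c) * ln n) \<le> exp (real m * ln 5)" by simp
  moreover have "exp ((1 + c) * ln n) = n powr (1 + c)" using n0 by (simp add: powr_def)
  moreover have "exp (real m * ln 5) = (5::real) ^ m"
    by (metis exp_ln_iff exp_of_nat_mult zero_less_numeral)
  ultimately have "n powr (1 + c) \<le> 5 ^ m" by simp
  moreover have "n powr (1 + c) = n * n powr c" using n0 by (simp add: powr_add)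
  ultimately have b: "n * n powr c \<le> 5 ^ m" by simp
  have pc: "n powr c > 0" using n0 by simp
  have "n / 5^m \<le> n / (n * n powr c)"
    using b n0 pc by (intro divide_left_mono) auto
  also have "\<dots> = 1 / n powr c" using n0 by simp
  finally show ?thesis using s1 by simp
qed


theorem proposition3p1:
  fixes d :: nat and q :: real
  assumes "d \<ge> 2" and "q \<ge> 1"
  shows "\<exists>pt::real. pt < 1 \<and> (\<exists>\<kappa>::real. \<kappa> > 1 \<and>
    (\<forall>p c u r j. pt \<le> p \<and> p \<le> 1 \<and> c \<ge> (1::real) \<and> orthonormal_frame d u \<and> j < d
       \<and> real (card (box_E d u r)) > 3 ^ (6 * d) \<longrightarrow>
       (let V = box_V d u r; E = box_E d u r; T = box_T d u r j; B = box_B d u r j;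
            n = real (card E) in
        PhiTB_cond V E T B p q
          (\<lambda>\<omega>. \<exists>C \<in> cuts_of E T B \<omega>. \<exists>e \<in> C.
                 edge_set_dist d e ((pivotal E T B \<omega> \<union> box_Ec d u r) - {e})
                   \<ge> \<kappa> * c * ln n)
          (\<lambda>\<omega>. \<not> connects \<omega> T B)
        \<le> 1 / n powr c)))"
proof -
  have d2: "d \<ge> 2" and q1: "q \<ge> 1" using assms by auto
  define D :: real where "D = 9 ^ d"
  have D1: "D \<ge> 1" unfolding D_def by simp
  have q0: "q > 0" using q1 by simp
  define pt where "pt = 1 - 1 / (6 * q * D)"
  define \<kappa> where "\<kappa> = 6 * real d"
  have qD: "q * D \<ge> 1"
  proof -
    have "1 * 1 \<le> q * D" by (rule mult_mono[OF q1 D1]) (use q1 in auto)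
    thus ?thesis by simp
  qed
  have qDp: "0 < q * D" using qD by simp
  have ptl: "pt < 1" unfolding pt_def using qDp by (simp add: mult.assoc)
  have \<kappa>1: "\<kappa> > 1" unfolding \<kappa>_def using d2 by simp
  have main: "pt \<le> p \<and> p \<le> 1 \<and> c \<ge> (1::real) \<and> orthonormal_frame d u \<and> j < d
       \<and> real (card (box_E d u r)) > 3 ^ (6 * d) \<longrightarrow>
       (let V = box_V d u r; E = box_E d u r; T = box_T d u r j; B = box_B d u r j;
            n = real (card E) in
        PhiTB_cond V E T B p q
          (\<lambda>\<omega>. \<exists>C \<in> cuts_of E T B \<omega>. \<exists>e \<in> C.
                 edge_set_dist d e ((pivotal E T B \<omega> \<union> box_Ec d u r) - {e})
                   \<ge> \<kappa> * c * ln n)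
          (\<lambda>\<omega>. \<not> connects \<omega> T B)
        \<le> 1 / n powr c)" for p c u r j
  proof
    assume hyp: "pt \<le> p \<and> p \<le> 1 \<and> c \<ge> (1::real) \<and> orthonormal_frame d u \<and> j < d
       \<and> real (card (box_E d u r)) > 3 ^ (6 * d)"
    hence pp: "pt \<le> p" "p \<le> 1" and c1: "c \<ge> 1" and cardE: "real (card (box_E d u r)) > 3 ^ (6 * d)" by auto
    define V where "V = box_V d u r"
    define E where "E = box_E d u r"
    define T where "T = box_T d u r j"
    define B where "B = box_B d u r j"
    define n where "n = real (card E)"
    define Aev where "Aev = (\<lambda>\<omega>. \<exists>C \<in> cuts_of E T B \<omega>. \<exists>e \<in> C.
                 edge_set_dist d e ((pivotal E T B \<omega> \<union> box_Ec d u r) - {e}) \<ge> \<kappa> * c * ln n)"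
    define Hev where "Hev = (\<lambda>\<omega>::int list set set. \<not> connects \<omega> T B)"
    have nbig: "n > 3 ^ (6 * d)" using cardE unfolding n_def E_def by simp
    have fE: "finite E"
    proof (rule ccontr)
      assume "infinite E" hence "n = 0" unfolding n_def by simp
      thus False using nbig by simp
    qed
    have "(1::real) \<le> 3 ^ (6 * d)" by (rule one_le_power) simp
    hence n1: "n \<ge> 1" using nbig by linarith
    have ln12: "ln n \<ge> 12"
    proof -
      have "exp (12::real) = exp 1 ^ 12" by (metis exp_of_nat_mult mult.right_neutral of_nat_numeral)
      also have "\<dots> \<le> 3 ^ 12" using exp_le by (intro power_mono) auto
      also have "(3::real) ^ 12 \<le> 3 ^ (6 * d)" using d2 by (intro power_increasing) auto
      finally have "exp 12 \<le> n" using nbig by simp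
      thus ?thesis using n1 by (simp add: ln_ge_iff)
    qed
    have ln3: "ln n \<ge> 3" using ln12 by simp
    define R where "R = \<kappa> * c * ln n"
    have dpos: "real d > 0" using d2 by simp
    have RdR: "R / real d = 6 * (c * ln n)" unfolding R_def \<kappa>_def using dpos by (simp add: field_simps)
    have cln: "c * ln n \<ge> 3"
    proof -
      have "1 * 3 \<le> c * ln n" by (rule mult_mono[OF c1 ln3]) (use c1 in auto)
      thus ?thesis by simp
    qed
    have Rd18: "R / real d \<ge> 18" using RdR cln by simp
    define \<rho> :: int where "\<rho> = \<lceil>R / real d\<rceil> - 1"
    define \<rho>' where "\<rho>' = \<rho> div 2"
    define m where "m = nat (\<rho>' - 1)"
    have \<rho>lo: "real_of_int \<rho> \<ge> R / real d - 1" unfolding \<rho>_def by linarith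
    have \<rho>hi: "real_of_int \<rho> < R / real d" unfolding \<rho>_def by linarith
    have \<rho>R: "real d * real_of_int \<rho> < R" using \<rho>hi dpos by (simp add: field_simps)
    have \<rho>17: "\<rho> \<ge> 17" using \<rho>lo Rd18 by linarith
    have r1: "1 \<le> \<rho>'" unfolding \<rho>'_def using \<rho>17 by simp
    have r2: "2 * \<rho>' \<le> \<rho>" unfolding \<rho>'_def by simp
    have mi: "int m = \<rho>' - 1" unfolding m_def \<rho>'_def using \<rho>17 by simp
    have m1: "m \<ge> 1" using mi \<rho>17 unfolding \<rho>'_def by simp
    have mle: "int m \<le> \<rho>' - 1" using mi by simp
    have mreal: "real m \<ge> 3 * c * ln n - 2"
    proof -
      have "2 * \<rho>' \<ge> \<rho> - 1" unfolding \<rho>'_def by simp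
      hence "real_of_int (2 * \<rho>') \<ge> real_of_int \<rho> - 1" by linarith
      hence "2 * real_of_int \<rho>' \<ge> R / real d - 2" using \<rho>lo by simp
      moreover have "real m = real_of_int \<rho>' - 1" using mi by (metis of_int_diff of_int_of_nat_eq of_int_1)
      ultimately show ?thesis using RdR by simp
    qed
    define Ls where "Ls = {L \<in> CS d E (m - 1). distinct L}"
    have Tbd: "T \<subseteq> box_bd d u r" unfolding T_def box_T_def by blast
    have Bbd: "B \<subseteq> box_bd d u r" unfolding B_def box_B_def by blast
    have cover: "\<exists>L\<in>Ls. set L \<inter> \<omega> = {} \<and> Hev (\<omega> \<union> set L)" if w: "\<omega> \<subseteq> E" "Aev \<omega>" "Hev \<omega>" for \<omega>
    proof -
      obtain C e where Ce: "C \<in> cuts_of E T B \<omega>" "e \<in> C"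
          "edge_set_dist d e ((pivotal E T B \<omega> \<union> box_Ec d u r) - {e}) \<ge> R"
        using w(2) unfolding Aev_def R_def by blast
      have H: "\<not> connects \<omega> T B" using w(3) unfolding Hev_def .
      obtain L where L: "length L = m" "distinct L" "set L \<subseteq> E" "set L \<inter> \<omega> = {}" "successively (near d) L"
          "\<not> connects (\<omega> \<union> set L) T B"
        using box_cover[OF d2 V_def E_def Tbd Bbd w(1) H Ce(1) Ce(2) Ce(3) \<rho>R r1 r2 mle] by blast
      have "L \<in> Ls" unfolding Ls_def CS_def using L m1 by simp
      thus ?thesis using L unfolding Hev_def by blast
    qed
    define \<rho>f where "\<rho>f = q * (1 - p) / p"
    define K where "K = \<rho>f ^ m"
    have p56: "p \<ge> 5/6"
    proof -
      have "1 / (6 * q * D) \<le> 1/6" using qD by (simp add: field_simps)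
      thus ?thesis using pp(1) unfolding pt_def by simp
    qed
    have p0: "p > 0" using p56 by simp
    have \<rho>f0: "\<rho>f \<ge> 0" unfolding \<rho>f_def using pp(2) p0 q0 by simp
    have D\<rho>f: "D * \<rho>f \<le> 1/5"
    proof -
      have "1 - p \<le> 1 / (6 * q * D)" using pp(1) unfolding pt_def by simp
      hence "q * D * (1 - p) \<le> 1/6" using q0 D1 by (simp add: field_simps)
      hence "D * \<rho>f = q * D * (1 - p) / p" unfolding \<rho>f_def by simp
      also have "\<dots> \<le> (1/6) / p" by (rule divide_right_mono[OF \<open>q * D * (1 - p) \<le> 1/6\<close>]) (use p0 in linarith)
      also have "\<dots> \<le> (1/6) / (5/6)" using p56 by (intro divide_left_mono) auto
      finally show ?thesis by simp
    qed
    have K0: "K \<ge> 0" unfolding K_def using \<rho>f0 by simp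
    let ?w = "rc_weight V E T B p q"
    have w0: "\<And>\<omega>. ?w \<omega> \<ge> 0"
    proof -
      fix \<omega> show "?w \<omega> \<ge> 0" by (rule rc_weight_nonneg) (use pp(2) p0 q0 in auto)
    qed
    have fCS: "finite (CS d E (m - 1))" by (rule CS_finite[OF fE])
    have fLs: "finite Ls" unfolding Ls_def using fCS by simp
    have LsE: "set L \<subseteq> E" if "L \<in> Ls" for L using that unfolding Ls_def CS_def by blast
    have EV: "\<forall>f\<in>F. \<exists>a b. f = {a,b} \<and> a \<in> V \<and> b \<in> V" if "F \<subseteq> E" for F
    proof
      fix f assume "f \<in> F"
      hence fE': "f \<in> E" using that by blast
      then obtain a b where "f = {a,b}" using box_E_edge unfolding E_def lattice_edge_def by blast
      moreover have "f \<subseteq> V" using fE' box_E_sub unfolding E_def V_def by blast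
      ultimately show "\<exists>a b. f = {a,b} \<and> a \<in> V \<and> b \<in> V" by blast
    qed
    have winj: "?w \<omega> \<le> K * ?w (\<omega> \<union> set L)" if L: "L \<in> Ls" and wE: "\<omega> \<subseteq> E" and dj: "set L \<inter> \<omega> = {}" for L \<omega>
    proof -
      have cl: "card (set L) = m"
      proof -
        have "length L = Suc (m - 1)" "distinct L" using L unfolding Ls_def CS_def by auto
        thus ?thesis using m1 distinct_card by fastforce
      qed
      have "?w \<omega> \<le> (q * (1 - p) / p) ^ card (set L) * ?w (\<omega> \<union> set L)"
        by (rule weight_ineq[OF p0 pp(2) q1 fE wE LsE[OF L] dj EV[OF LsE[OF L]]])
      thus ?thesis unfolding K_def \<rho>f_def cl .
    qed
    have SB: "(\<Sum>\<omega>\<in>{\<omega>. \<omega> \<subseteq> E \<and> Aev \<omega> \<and> Hev \<omega>}. ?w \<omega>) \<le> real (card Ls) * K * (\<Sum>\<omega>\<in>{\<omega>. \<omega> \<subseteq> E \<and> Hev \<omega>}. ?w \<omega>)"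
    proof (rule sum_bound[OF fE fLs w0 K0])
      fix \<omega> assume "\<omega> \<subseteq> E" "Aev \<omega>" "Hev \<omega>"
      thus "\<exists>L\<in>Ls. set L \<inter> \<omega> = {} \<and> Hev (\<omega> \<union> set L)" by (rule cover)
    next
      fix L assume "L \<in> Ls" thus "set L \<subseteq> E" by (rule LsE)
    next
      fix L \<omega> assume "L \<in> Ls" "\<omega> \<subseteq> E" "set L \<inter> \<omega> = {}"
      thus "?w \<omega> \<le> K * ?w (\<omega> \<union> set L)" by (rule winj)
    qed
    have cardLs: "real (card Ls) \<le> n * D ^ (m - 1)"
    proof -
      have "card Ls \<le> card (CS d E (m - 1))" unfolding Ls_def using fCS by (intro card_mono) auto
      also have "\<dots> \<le> card E * (9 ^ d) ^ (m - 1)"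
      proof (rule CS_card[OF fE])
        fix f assume fE': "f \<in> E"
        have le: "lattice_edge d f" using fE' box_E_edge unfolding E_def by blast
        have "{g \<in> E. near d g f} = {g \<in> E. lattice_edge d g \<and> near d g f}"
          using box_E_edge unfolding E_def by blast
        thus "card {g \<in> E. near d g f} \<le> 9 ^ d" using near_card[OF le, of E] by simp
      qed
      finally have "real (card Ls) \<le> real (card E * (9 ^ d) ^ (m - 1))" by linarith
      thus ?thesis unfolding n_def D_def by simp
    qed
    have "real (card Ls) * K \<le> n * D ^ m * \<rho>f ^ m"
    proof -
      have "D ^ (m - 1) \<le> D ^ m" using D1 by (intro power_increasing) auto
      hence "n * D ^ (m - 1) \<le> n * D ^ m" using n1 by simp
      hence "real (card Ls) \<le> n * D ^ m" using cardLs by simp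
      hence "real (card Ls) * K \<le> n * D ^ m * K" using K0 by (simp add: mult_right_mono)
      thus ?thesis unfolding K_def by simp
    qed
    also have "\<dots> \<le> 1 / n powr c" by (rule final_arith[OF n1 ln3 c1 D\<rho>f \<rho>f0 D1 mreal])
    finally have MK: "real (card Ls) * K \<le> 1 / n powr c" .
    have cond: "PhiTB_cond V E T B p q Aev Hev \<le> real (card Ls) * K"
    proof -
      have "PhiTB_cond V E T B p q Aev Hev =
         ((\<Sum>\<omega>\<in>{\<omega>. \<omega> \<subseteq> E \<and> Aev \<omega> \<and> Hev \<omega>}. ?w \<omega>) / (\<Sum>\<omega>\<in>Pow E. ?w \<omega>)) /
         ((\<Sum>\<omega>\<in>{\<omega>. \<omega> \<subseteq> E \<and> Hev \<omega>}. ?w \<omega>) / (\<Sum>\<omega>\<in>Pow E. ?w \<omega>))"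
        unfolding PhiTB_cond_def PhiTB_def by simp
      also have "\<dots> \<le> real (card Ls) * K"
        by (rule cond_bound[OF SB]) (auto intro!: sum_nonneg simp: w0 K0)
      finally show ?thesis .
    qed
    have "PhiTB_cond V E T B p q Aev Hev \<le> 1 / n powr c" using cond MK by linarith
    thus "let V = box_V d u r; E = box_E d u r; T = box_T d u r j; B = box_B d u r j;
            n = real (card E) in
        PhiTB_cond V E T B p q
          (\<lambda>\<omega>. \<exists>C \<in> cuts_of E T B \<omega>. \<exists>e \<in> C.
                 edge_set_dist d e ((pivotal E T B \<omega> \<union> box_Ec d u r) - {e})
                   \<ge> \<kappa> * c * ln n)
          (\<lambda>\<omega>. \<not> connects \<omega> T B)
        \<le> 1 / n powr c"
      unfolding Let_def V_def E_def T_def B_def n_def Aev_def Hev_def .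
  qed
  show ?thesis using ptl \<kappa>1 main by blast
qed


end
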